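(* Under the Setting and Standing Assumptions below, let $(x^k,y^k)_{k\in\mathbb{N}}$ be generated by SPDHG and set $u^k=(x^{k+1},y^k)$. Then for every $j\in\{1,\dots,n\}$, $\mathbb{E}\|T_ju^k-u^k\|^2\to0$ as $k\to\infty$, and $T_ju^k-u^k\to0$ almost surely.
   Context: Setting. $X$ and $Y_1,\dots,Y_n$ are finite-dimensional real Hilbert spaces, $Y=\prod_{i=1}^n Y_i$ with the product inner product, $A_i:X\to Y_i$ are linear operators, and $A:X\to Y$, $Ax=(A_1x,\dots,A_nx)$, with adjoint $A^T y=\sum_i A_i^T y_i$. The functionals $g:X\to\mathbb{R}\cup\{\infty\}$ and $f_i:Y_i\to\mathbb{R}\cup\{\infty\}$ are convex, proper and lower semicontinuous; $f_i^*$ is the convex conjugate of $f_i$. Let $\mathcal{L}(x,y)=\sum_{i=1}^n (\langle A_ix,y_i\rangle - f_i^*(y_i)) + g(x)$. A saddle point is a pair $\hat w=(\hat x,\hat y)\in X\times Y$ with $\mathcal{L}(\hat x,y)\le\mathcal{L}(\hat x,\hat y)\le\mathcal{L}(x,\hat y)$ for all $x\in X$, $y\in Y$. For a functional $h$ and $\sigma>0$, $\mathrm{prox}_{\sigma h}(v)=\arg\min_u \tfrac12\|v-u\|^2+\sigma h(u)$. SPDHG: fix probabilities $p_1,\dots,p_n>0$ with $\sum_i p_i=1$, step sizes $\tau,\sigma_1,\dots,\sigma_n>0$, and $x^0\in X$; set $y^0=0\in Y$, $z^0=\bar z^0=0\in X$. For $k\ge0$: draw $j^k\in\{1,\dots,n\}$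 independently of the past with $\mathbb{P}(j^k=i)=p_i$; set $x^{k+1}=\mathrm{prox}_{\tau g}(x^k-\tau\bar z^k)$; $y_i^{k+1}=\mathrm{prox}_{\sigma_i f_i^*}(y_i^k+\sigma_iA_ix^{k+1})$ if $i=j^k$ and $y_i^{k+1}=y_i^k$ otherwise; $\delta^k=A_{j^k}^T(y^{k+1}_{j^k}-y^k_{j^k})$; $z^{k+1}=z^k+\delta^k$; $\bar z^{k+1}=z^{k+1}+p_{j^k}^{-1}\delta^k$. Standing Assumptions: the set of saddle points is nonempty, and $\tau\sigma_i\|A_i\|^2<p_i$ for every $i$. Operators $T_j$: for $j\in\{1,\dots,n\}$ and $w=(x,y_1,\dots,y_n)\in X\times Y$, $T_jw=((T_jw)_0,\dots,(T_jw)_n)$ with $(T_jw)_j=\mathrm{prox}_{\sigma_j f_j^*}(y_j+\sigma_jA_jx)$, $(T_jw)_i=y_i$ for $i\in\{1,\dots,n\}\setminus\{j\}$, and $(T_jw)_0=\mathrm{prox}_{\tau g}\big(x-\tau A^Ty-(1+p_j^{-1})\tau A_j^T((T_jw)_j-y_j)\big)$. *)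

theory Defs
  imports "HOL-Analysis.Analysis" "HOL-Probability.Probability"
begin

text \<open>Extended-real valued convex analysis relative to a carrier set S
  (S is a linear subspace modelling a finite-dimensional Hilbert space).\<close>

definition econvex_on :: "'a::real_vector set \<Rightarrow> ('a \<Rightarrow> ereal) \<Rightarrow> bool" where
  "econvex_on S h \<longleftrightarrow> convex S \<and>
     (\<forall>x\<in>S. \<forall>y\<in>S. \<forall>t::real. 0 < t \<and> t < 1 \<longrightarrow>
        h ((1 - t) *\<^sub>R x + t *\<^sub>R y) \<le> ereal (1 - t) * h x + ereal t * h y)"

definition eproper_on :: "'a set \<Rightarrow> ('a \<Rightarrow> ereal) \<Rightarrow> bool" where
  "eproper_on S h \<longleftrightarrow> (\<forall>x\<in>S. h x \<noteq> -\<infinity>) \<and> (\<exists>x\<in>S. h x \<noteq> \<infinity>)"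

text \<open>Lower semicontinuity (sequential, equivalent to topological in metric spaces),
  relative to S.\<close>
definition elsc_on :: "'a::metric_space set \<Rightarrow> ('a \<Rightarrow> ereal) \<Rightarrow> bool" where
  "elsc_on S h \<longleftrightarrow> (\<forall>x\<in>S. \<forall>s. (\<forall>k. s k \<in> S) \<and> s \<longlonglongrightarrow> x \<longrightarrow> h x \<le> liminf (\<lambda>k. h (s k)))"

definition conjugate :: "'a::real_inner set \<Rightarrow> ('a \<Rightarrow> ereal) \<Rightarrow> 'a \<Rightarrow> ereal" where
  "conjugate S h v = (SUP u\<in>S. ereal (v \<bullet> u) - h u)"

definition prox :: "'a::real_normed_vector set \<Rightarrow> real \<Rightarrow> ('a \<Rightarrow> ereal) \<Rightarrow> 'a \<Rightarrow> 'a" where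
  "prox S \<sigma> h v = (THE u. u \<in> S \<and>
     (\<forall>w\<in>S. ereal ((norm (v - u))\<^sup>2 / 2) + ereal \<sigma> * h u \<le> ereal ((norm (v - w))\<^sup>2 / 2) + ereal \<sigma> * h w))"

definition lagrangian ::
  "nat \<Rightarrow> (nat \<Rightarrow> 'y::real_inner set) \<Rightarrow> (nat \<Rightarrow> 'x \<Rightarrow> 'y) \<Rightarrow> (nat \<Rightarrow> 'y \<Rightarrow> ereal) \<Rightarrow> ('x \<Rightarrow> ereal)
    \<Rightarrow> 'x \<Rightarrow> (nat \<Rightarrow> 'y) \<Rightarrow> ereal" where
  "lagrangian n Y A f g x y =
     (\<Sum>i=1..n. ereal (A i x \<bullet> y i) - conjugate (Y i) (f i) (y i)) + g x"

definition saddle_point ::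
  "nat \<Rightarrow> (nat \<Rightarrow> 'y::real_inner set) \<Rightarrow> (nat \<Rightarrow> 'x \<Rightarrow> 'y) \<Rightarrow> (nat \<Rightarrow> 'y \<Rightarrow> ereal) \<Rightarrow> ('x \<Rightarrow> ereal)
    \<Rightarrow> 'x \<Rightarrow> (nat \<Rightarrow> 'y) \<Rightarrow> bool" where
  "saddle_point n Y A f g xh yh \<longleftrightarrow> (\<forall>i\<in>{1..n}. yh i \<in> Y i) \<and>
     (\<forall>x y. (\<forall>i\<in>{1..n}. y i \<in> Y i) \<longrightarrow>
        lagrangian n Y A f g xh y \<le> lagrangian n Y A f g xh yh \<and>
        lagrangian n Y A f g xh yh \<le> lagrangian n Y A f g x yh)"

text \<open>SPDHG iterates (x^k, y^k, z^k, zbar^k) driven by the index sequence js (js k = j^k).\<close>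
primrec spdhg ::
  "(nat \<Rightarrow> real) \<Rightarrow> real \<Rightarrow> (nat \<Rightarrow> real) \<Rightarrow> ('x::euclidean_space \<Rightarrow> ereal) \<Rightarrow> (nat \<Rightarrow> 'y::euclidean_space \<Rightarrow> ereal)
    \<Rightarrow> (nat \<Rightarrow> 'y set) \<Rightarrow> (nat \<Rightarrow> 'x \<Rightarrow> 'y) \<Rightarrow> 'x \<Rightarrow> (nat \<Rightarrow> nat) \<Rightarrow> nat
    \<Rightarrow> 'x \<times> (nat \<Rightarrow> 'y) \<times> 'x \<times> 'x" where
  "spdhg p \<tau> \<sigma> g f Y A x0 js 0 = (x0, (\<lambda>_. 0), 0, 0)"
| "spdhg p \<tau> \<sigma> g f Y A x0 js (Suc k) =
     (case spdhg p \<tau> \<sigma> g f Y A x0 js k of (x, y, z, zb) \<Rightarrow>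
       (let j = js k;
            x' = prox UNIV \<tau> g (x - \<tau> *\<^sub>R zb);
            y' = y(j := prox (Y j) (\<sigma> j) (conjugate (Y j) (f j)) (y j + \<sigma> j *\<^sub>R A j x'));
            \<delta> = adjoint (A j) (y' j - y j);
            z' = z + \<delta>
        in (x', y', z', z' + (1 / p j) *\<^sub>R \<delta>)))"

definition Top ::
  "nat \<Rightarrow> (nat \<Rightarrow> real) \<Rightarrow> real \<Rightarrow> (nat \<Rightarrow> real) \<Rightarrow> ('x::euclidean_space \<Rightarrow> ereal) \<Rightarrow> (nat \<Rightarrow> 'y::euclidean_space \<Rightarrow> ereal)
    \<Rightarrow> (nat \<Rightarrow> 'y set) \<Rightarrow> (nat \<Rightarrow> 'x \<Rightarrow> 'y) \<Rightarrow> nat \<Rightarrow> 'x \<times> (nat \<Rightarrow> 'y) \<Rightarrow> 'x \<times> (nat \<Rightarrow> 'y)" where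
  "Top n p \<tau> \<sigma> g f Y A j w =
     (case w of (x, y) \<Rightarrow>
       (let yj = prox (Y j) (\<sigma> j) (conjugate (Y j) (f j)) (y j + \<sigma> j *\<^sub>R A j x);
            x' = prox UNIV \<tau> g (x - \<tau> *\<^sub>R (\<Sum>i=1..n. adjoint (A i) (y i))
                   - ((1 + 1 / p j) * \<tau>) *\<^sub>R adjoint (A j) (yj - y j))
        in (x', y(j := yj))))"

definition sqnorm :: "nat \<Rightarrow> 'x::real_normed_vector \<times> (nat \<Rightarrow> 'y::real_normed_vector) \<Rightarrow> real" where
  "sqnorm n w = (norm (fst w))\<^sup>2 + (\<Sum>i=1..n. (norm (snd w i))\<^sup>2)"

definition wdiff :: "'x::ab_group_add \<times> (nat \<Rightarrow> 'y::ab_group_add) \<Rightarrow> 'x \<times> (nat \<Rightarrow> 'y) \<Rightarrow> 'x \<times> (nat \<Rightarrow> 'y)" where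
  "wdiff w v = (fst w - fst v, \<lambda>i. snd w i - snd v i)"

end

theory Submission
  imports Defs
begin


definition pobj :: "real \<Rightarrow> ('a::real_normed_vector \<Rightarrow> ereal) \<Rightarrow> 'a \<Rightarrow> 'a \<Rightarrow> ereal" where
  "pobj \<sigma> h v w = ereal ((norm (v - w))\<^sup>2 / 2) + ereal \<sigma> * h w"

lemma prox_eq: "prox S \<sigma> h v = (THE u. u \<in> S \<and> (\<forall>w\<in>S. pobj \<sigma> h v u \<le> pobj \<sigma> h v w))"
  by (simp add: prox_def pobj_def)

lemma norm_sq_expand:
  fixes a b :: "'a::real_inner"
  shows "(norm (a - t *\<^sub>R b))\<^sup>2 = (norm a)\<^sup>2 - 2*t*(inner a b) + t\<^sup>2*(norm b)\<^sup>2"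
  unfolding power2_norm_eq_inner by (simp add: inner_diff_left inner_diff_right algebra_simps power2_eq_square inner_commute)

lemma le_eps_lemma:
  fixes X N D :: real
  assumes N: "N \<ge> 0" and H: "\<And>t. 0 < t \<Longrightarrow> t < 1 \<Longrightarrow> X \<le> t * N + D"
  shows "X \<le> D"
proof (rule ccontr)
  assume "\<not> X \<le> D"
  define t where "t = min (1/2) ((X - D) / (N + 1))"
  have t0: "0 < t" using \<open>\<not> X \<le> D\<close> N by (simp add: t_def)
  have t1: "t < 1" by (simp add: t_def)
  have "t \<le> (X - D) / (N + 1)" by (simp add: t_def)
  then have "t * (N + 1) \<le> X - D" using N by (simp add: field_simps)
  moreover have "t * N < t * (N + 1)" using t0 by simp
  ultimately have "t * N + D < X" by linarith
  with H[OF t0 t1] show False by linarith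
qed

lemma prox_subgrad:
  fixes S :: "'a::real_inner set"
  assumes \<sigma>: "\<sigma> > 0" and cv: "econvex_on S h" and nm: "\<forall>x\<in>S. h x \<noteq> -\<infinity>"
    and uS: "u \<in> S" and ha: "h u = ereal a"
    and mn: "\<forall>w\<in>S. pobj \<sigma> h v u \<le> pobj \<sigma> h v w"
    and wS: "w \<in> S"
  shows "ereal (a + inner (v - u) (w - u) / \<sigma>) \<le> h w"
proof (cases "h w")
  case PInf then show ?thesis by simp
next
  case MInf then show ?thesis using nm wS by simp
next
  case (real b)
  define X where "X = inner (v - u) (w - u)"
  define N where "N = (norm (w - u))\<^sup>2 / 2"
  have key: "X \<le> t * N + \<sigma> * (b - a)" if t: "0 < t" "t < 1" for t
  proof -
    define ut where "ut = (1-t) *\<^sub>R u + t *\<^sub>R w"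
    have utS: "ut \<in> S" using cv uS wS t unfolding econvex_on_def convex_def ut_def by auto
    have "h ut \<le> ereal (1-t) * h u + ereal t * h w" using cv uS wS t unfolding econvex_on_def ut_def by auto
    then have hut: "h ut \<le> ereal ((1-t)*a + t*b)" using ha real by simp
    obtain c where c: "h ut = ereal c" using nm utS hut by (cases "h ut") auto
    have cle: "c \<le> (1-t)*a + t*b" using hut c by simp
    have "pobj \<sigma> h v u \<le> pobj \<sigma> h v ut" using mn utS by auto
    then have m: "(norm (v-u))\<^sup>2/2 + \<sigma>*a \<le> (norm (v-ut))\<^sup>2/2 + \<sigma>*c" using ha c by (simp add: pobj_def)
    have "v - ut = (v - u) - t *\<^sub>R (w - u)" by (simp add: ut_def algebra_simps)
    then have e: "(norm (v-ut))\<^sup>2 = (norm (v-u))\<^sup>2 - 2*t*X + t\<^sup>2*(norm (w-u))\<^sup>2"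
      using norm_sq_expand unfolding X_def by metis
    have sc: "\<sigma>*c \<le> \<sigma>*((1-t)*a + t*b)" using cle \<sigma> by (simp add: mult_left_mono)
    have "t * X \<le> t * (t * N + \<sigma> * (b - a))"
      using m e sc unfolding N_def by (simp add: algebra_simps power2_eq_square)
    then show ?thesis using t by simp
  qed
  have N0: "N \<ge> 0" by (simp add: N_def)
  have "X \<le> \<sigma> * (b - a)"
    using le_eps_lemma[OF N0 key] .
  then have "X / \<sigma> \<le> b - a" using \<sigma> by (simp add: field_simps)
  then show ?thesis using real unfolding X_def by simp
qed

lemma pobj_fin: "h w = ereal b \<Longrightarrow> pobj \<sigma> h v w = ereal ((norm (v - w))\<^sup>2 / 2 + \<sigma> * b)"
  by (simp add: pobj_def)

lemma pobj_inf: "\<sigma> > 0 \<Longrightarrow> h w = \<infinity> \<Longrightarrow> pobj \<sigma> h v w = \<infinity>"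
  by (simp add: pobj_def)

lemma coercive_aux:
  fixes r B K :: real
  assumes "r \<ge> 0" "B \<ge> 0" "r\<^sup>2/2 - B*r \<le> K"
  shows "r \<le> max 1 (2*\<bar>K\<bar> + 2*B)"
proof (cases "r \<le> 1")
  case True then show ?thesis by simp
next
  case False
  have "r*r/2 \<le> (\<bar>K\<bar> + B)*r" using assms False
    by (simp add: power2_eq_square algebra_simps) (smt (verit) mult_le_cancel_right1)
  then have "r/2 \<le> \<bar>K\<bar> + B" using False
    by (smt (verit, best) divide_le_eq mult.commute mult_le_cancel_left_pos times_divide_eq_left)
  then show ?thesis by simp
qed

lemma lower_aux:
  fixes r B C :: real
  shows "r\<^sup>2/2 - B*r + C \<ge> C - B\<^sup>2/2"
proof -
  have "0 \<le> (r - B)\<^sup>2/2" by simp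
  then show ?thesis by (simp add: power2_eq_square algebra_simps)
qed

lemma prox_exists:
  fixes S :: "'a::euclidean_space set"
  assumes \<sigma>: "\<sigma> > 0" and cl: "closed S" and nm: "\<forall>x\<in>S. h x \<noteq> -\<infinity>"
    and x0: "x0 \<in> S" "h x0 = ereal c0" and lsc: "elsc_on S h"
    and minor: "\<forall>x\<in>S. ereal (\<alpha> + inner \<beta> x) \<le> h x"
  shows "\<exists>u\<in>S. \<forall>w\<in>S. pobj \<sigma> h v u \<le> pobj \<sigma> h v w"
proof -
  define B where "B = \<sigma> * norm \<beta>"
  define C where "C = \<sigma> * \<alpha> - \<sigma> * norm \<beta> * norm v"
  have B0: "B \<ge> 0" using \<sigma> by (simp add: B_def)
  have Lb: "pobj \<sigma> h v w \<ge> ereal ((norm (v-w))\<^sup>2/2 - B * norm (v-w) + C)" if wS: "w \<in> S" for w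
  proof (cases "h w")
    case PInf then show ?thesis using \<sigma> by (simp add: pobj_def)
  next
    case MInf then show ?thesis using nm wS by simp
  next
    case (real b)
    have "\<alpha> + inner \<beta> w \<le> b" using minor wS real by force
    moreover have "inner \<beta> w \<ge> - norm \<beta> * norm w"
      using Cauchy_Schwarz_ineq2[of \<beta> w] by (simp add: abs_le_iff)
    moreover have "norm w \<le> norm v + norm (v - w)" using norm_triangle_sub[of w v]
      by (simp add: norm_minus_commute)
    moreover have "norm \<beta> * norm w \<le> norm \<beta> * (norm v + norm (v-w))"
      using calculation(3) by (rule mult_left_mono) simp
    ultimately have "\<alpha> - norm \<beta> * (norm v + norm (v-w)) \<le> b"
      by linarith
    then have "\<sigma> * (\<alpha> - norm \<beta> * (norm v + norm (v-w))) \<le> \<sigma> * b" using \<sigma> by simp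
    then show ?thesis using real by (simp add: pobj_def B_def C_def algebra_simps)
  qed
  define lb where "lb = C - B\<^sup>2/2"
  have Lb2: "pobj \<sigma> h v w \<ge> ereal lb" if "w \<in> S" for w
  proof -
    have "ereal lb \<le> ereal ((norm (v-w))\<^sup>2/2 - B * norm (v-w) + C)"
      using lower_aux[where r="norm (v-w)" and B=B and C=C] unfolding lb_def by simp
    then show ?thesis using Lb[OF that] by (rule order_trans)
  qed
  define m where "m = (INF w\<in>S. pobj \<sigma> h v w)"
  have mle: "m \<le> pobj \<sigma> h v x0" unfolding m_def using x0 by (simp add: INF_lower)
  have mge: "m \<ge> ereal lb" unfolding m_def using Lb2 by (simp add: INF_greatest)
  have "pobj \<sigma> h v x0 = ereal ((norm (v - x0))\<^sup>2 / 2 + \<sigma> * c0)" using x0 by (simp add: pobj_fin)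
  then obtain mr where mr: "m = ereal mr" using mle mge by (cases m) auto
  have "\<exists>w\<in>S. pobj \<sigma> h v w < ereal (mr + 1/(Suc k))" for k :: nat
  proof -
    have "m < ereal (mr + 1/(Suc k))" using mr by simp
    then show ?thesis unfolding m_def by (simp add: INF_less_iff)
  qed
  then obtain ws where wsS: "\<And>k. ws k \<in> S" and wsl: "\<And>k. pobj \<sigma> h v (ws k) < ereal (mr + 1/(Suc k))"
    by metis
  have wsg: "pobj \<sigma> h v (ws k) \<ge> ereal mr" for k
    using wsS[of k] unfolding mr[symmetric] m_def by (simp add: INF_lower)
  have "\<exists>b. h (ws k) = ereal b" for k
  proof (cases "h (ws k)")
    case PInf then show ?thesis using wsl[of k] \<sigma> by (simp add: pobj_def)
  next
    case MInf then show ?thesis using nm wsS[of k] by simp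
  qed auto
  then obtain hb where hb: "\<And>k. h (ws k) = ereal (hb k)" by metis
  define P where "P k = (norm (v - ws k))\<^sup>2 / 2 + \<sigma> * hb k" for k
  have Pe: "pobj \<sigma> h v (ws k) = ereal (P k)" for k by (simp add: P_def pobj_fin hb)
  have Pb: "mr \<le> P k" "P k < mr + 1/(Suc k)" for k using wsg[of k] wsl[of k] by (simp_all add: Pe)
  define R where "R = max 1 (2*\<bar>mr + 1 - C\<bar> + 2*B)"
  have wsR: "ws k \<in> cball v R \<inter> S" for k
  proof -
    have "ereal ((norm (v-ws k))\<^sup>2/2 - B * norm (v-ws k) + C) \<le> ereal (P k)"
      using Lb[OF wsS[of k]] by (simp add: Pe)
    moreover have "P k < mr + 1" using Pb(2)[of k]
    proof -
      have "1 / real (Suc k) \<le> 1" by simp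
      then show ?thesis using Pb(2)[of k] by linarith
    qed
    ultimately have "(norm (v-ws k))\<^sup>2/2 - B * norm (v-ws k) \<le> mr + 1 - C" by simp
    from coercive_aux[OF norm_ge_zero B0 this] show ?thesis using wsS by (simp add: R_def dist_norm)
  qed
  have "compact (cball v R \<inter> S)" using cl by (simp add: compact_Int_closed)
  from compact_imp_seq_compact[OF this] wsR obtain l r where
    lS: "l \<in> cball v R \<inter> S" and r: "strict_mono r" and lim: "(ws \<circ> r) \<longlonglongrightarrow> l"
    unfolding seq_compact_def by metis
  have Plim: "(\<lambda>k. P (r k)) \<longlonglongrightarrow> mr"
  proof -
    have "(\<lambda>k. inverse (real (Suc (r k)))) \<longlonglongrightarrow> 0"
      using LIMSEQ_subseq_LIMSEQ[OF LIMSEQ_inverse_real_of_nat r] by (simp add: o_def)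
    then have "(\<lambda>k. 1 / real (Suc (r k))) \<longlonglongrightarrow> 0" by (simp add: inverse_eq_divide)
    then have up: "(\<lambda>k. mr + 1/(Suc (r k))) \<longlonglongrightarrow> mr"
      using tendsto_add[OF tendsto_const[of mr]] by fastforce
    have e1: "\<forall>\<^sub>F n in sequentially. mr \<le> P (r n)" using Pb(1) by simp
    have e2: "\<forall>\<^sub>F n in sequentially. P (r n) \<le> mr + 1 / real (Suc (r n))" using Pb(2) by (intro always_eventually allI less_imp_le) simp
    show ?thesis by (rule tendsto_sandwich[OF e1 e2 tendsto_const up])
  qed
  have qlim: "(\<lambda>k. (norm (v - ws (r k)))\<^sup>2 / 2) \<longlonglongrightarrow> (norm (v - l))\<^sup>2 / 2"
    using lim unfolding o_def by (intro tendsto_intros) auto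
  have hlim: "(\<lambda>k. h (ws (r k))) \<longlonglongrightarrow> ereal ((mr - (norm (v - l))\<^sup>2 / 2) / \<sigma>)"
  proof -
    have "h (ws (r k)) = ereal ((P (r k) - (norm (v - ws (r k)))\<^sup>2 / 2) / \<sigma>)" for k
      using \<sigma> by (simp add: hb P_def)
    moreover have "(\<lambda>k. (P (r k) - (norm (v - ws (r k)))\<^sup>2 / 2) / \<sigma>) \<longlonglongrightarrow> (mr - (norm (v - l))\<^sup>2 / 2) / \<sigma>"
      using \<sigma> by (intro tendsto_divide tendsto_diff Plim qlim tendsto_const) auto
    ultimately show ?thesis by (simp add: tendsto_ereal)
  qed
  have lA: "\<forall>s. (\<forall>k. s k \<in> S) \<and> s \<longlonglongrightarrow> l \<longrightarrow> h l \<le> liminf (\<lambda>k. h (s k))"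
    using lsc lS unfolding elsc_on_def by auto
  have "h l \<le> liminf (\<lambda>k. h ((ws \<circ> r) k))"
    using lA[rule_format, of "ws \<circ> r"] wsS lim by simp
  also have "\<dots> = ereal ((mr - (norm (v - l))\<^sup>2 / 2) / \<sigma>)"
    using hlim by (simp add: o_def lim_imp_Liminf)
  finally have hl: "h l \<le> ereal ((mr - (norm (v - l))\<^sup>2 / 2) / \<sigma>)" .
  then obtain hl where hle: "h l = ereal hl" using nm lS by (cases "h l") auto
  have "\<sigma> * hl \<le> mr - (norm (v - l))\<^sup>2 / 2" using hl hle \<sigma> by (simp add: field_simps)
  then have "pobj \<sigma> h v l \<le> m" using hle mr by (simp add: pobj_fin)
  moreover have "m \<le> pobj \<sigma> h v w" if "w \<in> S" for w unfolding m_def using that by (simp add: INF_lower)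
  ultimately have "\<forall>w\<in>S. pobj \<sigma> h v l \<le> pobj \<sigma> h v w" using order_trans by blast
  moreover have "l \<in> S" using lS by simp
  ultimately show ?thesis by blast
qed

lemma min_fin:
  assumes \<sigma>: "\<sigma> > 0" and nm: "\<forall>x\<in>S. h x \<noteq> -\<infinity>"
    and x0: "x0 \<in> S" "h x0 = ereal c0" and uS: "u \<in> S"
    and mn: "\<forall>w\<in>S. pobj \<sigma> h v u \<le> pobj \<sigma> h v w"
  shows "\<exists>a. h u = ereal a"
proof (cases "h u")
  case PInf
  then have "pobj \<sigma> h v u = \<infinity>" using \<sigma> by (simp add: pobj_inf)
  moreover have "pobj \<sigma> h v x0 \<noteq> \<infinity>" using x0 by (simp add: pobj_fin)
  moreover have "pobj \<sigma> h v u \<le> pobj \<sigma> h v x0" using mn x0 by blast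
  ultimately show ?thesis by simp
qed (use nm uS in auto)

lemma prox_props:
  fixes S :: "'a::euclidean_space set"
  assumes \<sigma>: "\<sigma> > 0" and cl: "closed S" and cv: "econvex_on S h" and nm: "\<forall>x\<in>S. h x \<noteq> -\<infinity>"
    and x0: "x0 \<in> S" "h x0 = ereal c0" and lsc: "elsc_on S h"
    and minor: "\<forall>x\<in>S. ereal (\<alpha> + inner \<beta> x) \<le> h x"
  shows "prox S \<sigma> h v \<in> S \<and> (\<exists>a. h (prox S \<sigma> h v) = ereal a \<and>
     (\<forall>w\<in>S. ereal (a + inner (v - prox S \<sigma> h v) (w - prox S \<sigma> h v) / \<sigma>) \<le> h w))"
proof -
  let ?P = "\<lambda>u. u \<in> S \<and> (\<forall>w\<in>S. pobj \<sigma> h v u \<le> pobj \<sigma> h v w)"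
  have sg: "\<exists>a. h u = ereal a \<and> (\<forall>w\<in>S. ereal (a + inner (v - u) (w - u) / \<sigma>) \<le> h w)" if "?P u" for u
  proof -
    from that have uS: "u \<in> S" and mn: "\<forall>w\<in>S. pobj \<sigma> h v u \<le> pobj \<sigma> h v w" by auto
    obtain a where a: "h u = ereal a" using min_fin[OF \<sigma> nm x0 uS mn] by blast
    show ?thesis using prox_subgrad[OF \<sigma> cv nm _ a] that a by blast
  qed
  obtain u where u: "?P u" using prox_exists[OF \<sigma> cl nm x0 lsc minor, of v] by blast
  have uniq: "u' = u" if u'P: "?P u'" for u'
  proof -
    obtain a where a: "h u = ereal a" "\<forall>w\<in>S. ereal (a + inner (v - u) (w - u) / \<sigma>) \<le> h w"
      using sg[OF u] by blast
    obtain a' where a': "h u' = ereal a'" "\<forall>w\<in>S. ereal (a' + inner (v - u') (w - u') / \<sigma>) \<le> h w"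
      using sg[OF u'P] by blast
    have "a + inner (v - u) (u' - u) / \<sigma> \<le> a'" using a(2) a'(1) u'P by force
    moreover have "a' + inner (v - u') (u - u') / \<sigma> \<le> a" using a'(2) a(1) u by force
    ultimately have "inner (v - u) (u' - u) / \<sigma> + inner (v - u') (u - u') / \<sigma> \<le> 0" by linarith
    then have "(inner (v - u) (u' - u) + inner (v - u') (u - u')) / \<sigma> \<le> 0" by (simp add: add_divide_distrib)
    then have "inner (v - u) (u' - u) + inner (v - u') (u - u') \<le> 0" using \<sigma>
      by (simp add: divide_le_0_iff)
    moreover have "inner (v - u) (u' - u) + inner (v - u') (u - u') = inner (u - u') (u - u')"
      by (simp add: inner_diff_left inner_diff_right inner_commute)
    ultimately have "inner (u - u') (u - u') \<le> 0" by simp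
    then have "u - u' = 0" by (metis inner_gt_zero_iff not_le)
    then show ?thesis by simp
  qed
  have "prox S \<sigma> h v = u" unfolding prox_eq using u uniq by (rule the_equality)
  then show ?thesis using u sg[OF u] by simp
qed



lemma epi_convex:
  fixes S :: "'y::euclidean_space set"
  assumes cv: "econvex_on S f"
  shows "convex {p :: 'y \<times> real. fst p \<in> S \<and> f (fst p) \<le> ereal (snd p)}"
  unfolding convex_alt
proof (intro ballI allI impI)
  fix p q :: "'y \<times> real" and u :: real
  assume p: "p \<in> {p. fst p \<in> S \<and> f (fst p) \<le> ereal (snd p)}"
    and q: "q \<in> {p. fst p \<in> S \<and> f (fst p) \<le> ereal (snd p)}" and u: "0 \<le> u \<and> u \<le> 1"
  have cS: "convex S" using cv by (simp add: econvex_on_def)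
  have inS: "(1 - u) *\<^sub>R fst p + u *\<^sub>R fst q \<in> S" using cS p q u unfolding convex_alt by auto
  have "f ((1 - u) *\<^sub>R fst p + u *\<^sub>R fst q) \<le> ereal ((1-u) * snd p + u * snd q)"
  proof (cases "u = 0 \<or> u = 1")
    case True then show ?thesis using p q by auto
  next
    case False
    then have u': "0 < u" "u < 1" using u by auto
    have "f ((1 - u) *\<^sub>R fst p + u *\<^sub>R fst q) \<le> ereal (1-u) * f (fst p) + ereal u * f (fst q)"
      using cv p q u' unfolding econvex_on_def by auto
    also have "\<dots> \<le> ereal (1-u) * ereal (snd p) + ereal u * ereal (snd q)"
      using p q u' by (intro add_mono ereal_mult_left_mono) auto
    finally show ?thesis by simp
  qed
  then show "(1 - u) *\<^sub>R p + u *\<^sub>R q \<in> {p. fst p \<in> S \<and> f (fst p) \<le> ereal (snd p)}"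
    using inS by simp
qed

lemma epi_closed:
  fixes S :: "'y::euclidean_space set"
  assumes cl: "closed S" and lsc: "elsc_on S f"
  shows "closed {p :: 'y \<times> real. fst p \<in> S \<and> f (fst p) \<le> ereal (snd p)}"
  unfolding closed_sequential_limits
proof (intro allI impI)
  fix x :: "nat \<Rightarrow> 'y \<times> real" and l
  assume a: "(\<forall>n. x n \<in> {p. fst p \<in> S \<and> f (fst p) \<le> ereal (snd p)}) \<and> x \<longlonglongrightarrow> l"
  have l1: "(\<lambda>n. fst (x n)) \<longlonglongrightarrow> fst l" using a by (intro tendsto_fst) auto
  have l2: "(\<lambda>n. snd (x n)) \<longlonglongrightarrow> snd l" using a by (intro tendsto_snd) auto
  have "\<forall>n. fst (x n) \<in> S" using a by auto
  then have inS: "fst l \<in> S" using closed_sequentially[OF cl _ l1] by blast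
  have "f (fst l) \<le> liminf (\<lambda>n. f (fst (x n)))" using lsc inS l1 a unfolding elsc_on_def by auto
  also have "\<dots> \<le> liminf (\<lambda>n. ereal (snd (x n)))" using a by (intro Liminf_mono) auto
  also have "\<dots> = ereal (snd l)" using l2 by (intro lim_imp_Liminf) (auto simp: tendsto_ereal)
  finally show "l \<in> {p. fst p \<in> S \<and> f (fst p) \<le> ereal (snd p)}" using inS by simp
qed

lemma affine_minor:
  fixes S :: "'y::euclidean_space set"
  assumes sub: "subspace S" and cv: "econvex_on S f" and pr: "eproper_on S f" and lsc: "elsc_on S f"
  shows "\<exists>c\<in>S. \<exists>d. \<forall>x\<in>S. ereal (inner c x + d) \<le> f x"
proof -
  define E where "E = {p :: 'y \<times> real. fst p \<in> S \<and> f (fst p) \<le> ereal (snd p)}"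
  obtain x0 where x0: "x0 \<in> S" "f x0 \<noteq> \<infinity>" using pr unfolding eproper_on_def by auto
  obtain r0 where r0: "f x0 = ereal r0" using x0 pr unfolding eproper_on_def by (cases "f x0") auto
  have "(x0, r0 - 1) \<notin> E" using r0 by (simp add: E_def)
  from separating_hyperplane_closed_point[OF epi_convex[OF cv] epi_closed[OF closed_subspace[OF sub] lsc] this[unfolded E_def]]
  obtain a b where ab: "inner a (x0, r0 - 1) < b" "\<forall>p\<in>E. b < inner a p" unfolding E_def by blast
  obtain a1 a2 where a: "a = (a1, a2)" by (cases a)
  have "(x0, r0) \<in> E" using x0 r0 by (simp add: E_def)
  then have "b < inner a1 x0 + a2 * r0" using ab a by force
  moreover have "inner a1 x0 + a2 * (r0 - 1) < b" using ab a by simp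
  ultimately have a2: "a2 > 0" by (simp add: algebra_simps)
  define c0 where "c0 = - (1/a2) *\<^sub>R a1"
  have lowb: "ereal (inner c0 x + b / a2) \<le> f x" if xS: "x \<in> S" for x
  proof (cases "f x")
    case (real r)
    then have "(x, r) \<in> E" using xS by (simp add: E_def)
    then have "b < inner a1 x + a2 * r" using ab a by force
    then have "b / a2 - inner a1 x / a2 < r" using a2 by (simp add: field_simps)
    then show ?thesis using real by (simp add: c0_def)
  next
    case MInf then show ?thesis using pr xS unfolding eproper_on_def by auto
  qed simp
  obtain c z where cz: "c \<in> span S" "\<And>w. w \<in> span S \<Longrightarrow> orthogonal z w" "c0 = c + z"
    using orthogonal_subspace_decomp_exists by blast
  have cS: "c \<in> S" using cz(1) sub by (metis span_eq_iff)
  have "inner c0 x = inner c x" if "x \<in> S" for x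
  proof -
    have "x \<in> span S" using that sub by (metis span_eq_iff)
    then show ?thesis using cz by (simp add: inner_add_left orthogonal_def)
  qed
  then show ?thesis using cS lowb by metis
qed



lemma conj_term_fin: "f u = ereal r \<Longrightarrow> ereal (inner x u) - f u = ereal (inner x u - r)"
  by simp

lemma conj_upper: "u \<in> S \<Longrightarrow> f u = ereal r \<Longrightarrow> ereal (inner x u - r) \<le> conjugate S f x"
  unfolding conjugate_def by (metis (no_types, lifting) SUP_upper conj_term_fin)

lemma conj_minor:
  assumes "x0 \<in> S" "f x0 = ereal r0" "x \<in> S"
  shows "ereal (- r0 + inner x0 x) \<le> conjugate S f x"
  using conj_upper[of x0 S f r0 x] assms by (simp add: inner_commute)

lemma conj_convex:
  fixes S :: "'y::real_inner set"
  assumes sub: "subspace S" and pr: "eproper_on S f"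
  shows "econvex_on S (conjugate S f)"
  unfolding econvex_on_def
proof (intro conjI ballI allI impI)
  show "convex S" using sub by (rule subspace_imp_convex)
  fix x y and t :: real assume xS: "x \<in> S" and yS: "y \<in> S" and t: "0 < t \<and> t < 1"
  show "conjugate S f ((1 - t) *\<^sub>R x + t *\<^sub>R y) \<le> ereal (1 - t) * conjugate S f x + ereal t * conjugate S f y"
    unfolding conjugate_def[of S f "(1 - t) *\<^sub>R x + t *\<^sub>R y"]
  proof (rule SUP_least)
    fix u assume uS: "u \<in> S"
    show "ereal (inner ((1 - t) *\<^sub>R x + t *\<^sub>R y) u) - f u \<le> ereal (1 - t) * conjugate S f x + ereal t * conjugate S f y"
    proof (cases "f u")
      case (real r)
      have "ereal (inner ((1 - t) *\<^sub>R x + t *\<^sub>R y) u) - f u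
          = ereal (1 - t) * ereal (inner x u - r) + ereal t * ereal (inner y u - r)"
        using real by (simp add: inner_add_left algebra_simps)
      also have "\<dots> \<le> ereal (1 - t) * conjugate S f x + ereal t * conjugate S f y"
        using t conj_upper[of u S f r] uS real by (intro add_mono ereal_mult_left_mono) auto
      finally show ?thesis .
    next
      case MInf then show ?thesis using pr uS unfolding eproper_on_def by auto
    qed simp
  qed
qed

lemma conj_lsc:
  fixes S :: "'y::real_inner set"
  assumes pr: "eproper_on S f"
  shows "elsc_on S (conjugate S f)"
  unfolding elsc_on_def
proof (intro ballI allI impI)
  fix x s assume xS: "x \<in> S" and s: "(\<forall>k. s k \<in> S) \<and> s \<longlonglongrightarrow> x"
  show "conjugate S f x \<le> liminf (\<lambda>k. conjugate S f (s k))"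
    unfolding conjugate_def[of S f x]
  proof (rule SUP_least)
    fix u assume uS: "u \<in> S"
    show "ereal (inner x u) - f u \<le> liminf (\<lambda>k. conjugate S f (s k))"
    proof (cases "f u")
      case (real r)
      have "(\<lambda>k. inner (s k) u - r) \<longlonglongrightarrow> inner x u - r"
        using s by (intro tendsto_intros) auto
      then have "liminf (\<lambda>k. ereal (inner (s k) u - r)) = ereal (inner x u - r)"
        by (intro lim_imp_Liminf) (auto simp: tendsto_ereal)
      moreover have "liminf (\<lambda>k. ereal (inner (s k) u - r)) \<le> liminf (\<lambda>k. conjugate S f (s k))"
        using conj_upper[of u S f r] uS real by (intro Liminf_mono) auto
      ultimately show ?thesis using real by simp
    next
      case MInf then show ?thesis using pr uS unfolding eproper_on_def by auto
    qed simp
  qed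
qed

lemma conj_somewhere:
  fixes S :: "'y::euclidean_space set"
  assumes sub: "subspace S" and cv: "econvex_on S f" and pr: "eproper_on S f" and lsc: "elsc_on S f"
  shows "\<exists>c\<in>S. conjugate S f c \<noteq> \<infinity>"
proof -
  obtain c d where c: "c \<in> S" "\<forall>x\<in>S. ereal (inner c x + d) \<le> f x"
    using affine_minor[OF assms] by blast
  have "conjugate S f c \<le> ereal (- d)"
    unfolding conjugate_def
  proof (rule SUP_least)
    fix u assume uS: "u \<in> S"
    show "ereal (inner c u) - f u \<le> ereal (- d)"
    proof (cases "f u")
      case (real r)
      then have "inner c u + d \<le> r" using c uS by force
      then show ?thesis using real by simp
    next
      case MInf then show ?thesis using pr uS unfolding eproper_on_def by auto
    qed simp
  qed
  then have "conjugate S f c \<noteq> \<infinity>" by auto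
  then show ?thesis using c by blast
qed

lemma conj_minor_ex:
  assumes pr: "eproper_on S f"
  shows "\<exists>\<alpha> \<beta>. \<forall>x\<in>S. ereal (\<alpha> + inner \<beta> x) \<le> conjugate S f x"
proof -
  obtain x0 where x0: "x0 \<in> S" "f x0 \<noteq> \<infinity>" using pr unfolding eproper_on_def by auto
  obtain r0 where r0: "f x0 = ereal r0" using x0 pr unfolding eproper_on_def by (cases "f x0") auto
  show ?thesis using conj_minor[of x0 S f r0] x0(1) r0 by blast
qed

lemma conj_nm:
  assumes pr: "eproper_on S f"
  shows "\<forall>x\<in>S. conjugate S f x \<noteq> -\<infinity>"
proof -
  obtain \<alpha> \<beta> where "\<forall>x\<in>S. ereal (\<alpha> + inner \<beta> x) \<le> conjugate S f x" using conj_minor_ex[OF pr] by blast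
  then show ?thesis by (metis MInfty_neq_ereal(1) ereal_infty_less_eq(2))
qed



locale setting =
  fixes n :: nat and p \<sigma> :: "nat \<Rightarrow> real" and \<tau> :: real
    and g :: "'x::euclidean_space \<Rightarrow> ereal" and f :: "nat \<Rightarrow> 'y::euclidean_space \<Rightarrow> ereal"
    and Y :: "nat \<Rightarrow> 'y set" and A :: "nat \<Rightarrow> 'x \<Rightarrow> 'y"
  assumes Y_sub: "\<forall>i\<in>{1..n}. subspace (Y i)"
    and A_lin: "\<forall>i\<in>{1..n}. linear (A i) \<and> (\<forall>x. A i x \<in> Y i)"
    and g_pcl: "econvex_on UNIV g \<and> eproper_on UNIV g \<and> elsc_on UNIV g"
    and f_pcl: "\<forall>i\<in>{1..n}. econvex_on (Y i) (f i) \<and> eproper_on (Y i) (f i) \<and> elsc_on (Y i) (f i)"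
    and p_pos: "\<forall>i\<in>{1..n}. p i > 0" and p_sum: "(\<Sum>i=1..n. p i) = 1"
    and tau_pos: "\<tau> > 0" and sigma_pos: "\<forall>i\<in>{1..n}. \<sigma> i > 0"
    and saddle: "\<exists>xh yh. saddle_point n Y A f g xh yh"
    and steps: "\<forall>i\<in>{1..n}. \<tau> * \<sigma> i * (onorm (A i))\<^sup>2 < p i"
begin

abbreviation F where "F i \<equiv> conjugate (Y i) (f i)"

lemma F_nm: "i \<in> {1..n} \<Longrightarrow> \<forall>x\<in>Y i. F i x \<noteq> -\<infinity>"
  using conj_nm f_pcl by blast

lemma F_some: "i \<in> {1..n} \<Longrightarrow> \<exists>c\<in>Y i. F i c \<noteq> \<infinity>"
  using conj_somewhere f_pcl Y_sub by blast

lemma g_nm: "g x \<noteq> -\<infinity>" using g_pcl unfolding eproper_on_def by auto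

lemma saddle_facts:
  obtains xh yh gx c where "\<forall>i\<in>{1..n}. yh i \<in> Y i" "g xh = ereal gx"
    "\<forall>x. ereal (gx + inner (- (\<Sum>i=1..n. adjoint (A i) (yh i))) (x - xh)) \<le> g x"
    "\<forall>i\<in>{1..n}. F i (yh i) = ereal (c i)"
    "\<forall>i\<in>{1..n}. \<forall>y\<in>Y i. ereal (c i + inner (A i xh) (y - yh i)) \<le> F i y"
proof -
  obtain xh yh where sp: "saddle_point n Y A f g xh yh" using saddle by blast
  have yhY: "\<forall>i\<in>{1..n}. yh i \<in> Y i" using sp unfolding saddle_point_def by auto
  have sp1: "\<And>y. (\<forall>i\<in>{1..n}. y i \<in> Y i) \<Longrightarrow> lagrangian n Y A f g xh y \<le> lagrangian n Y A f g xh yh"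
    using sp unfolding saddle_point_def by blast
  have sp2: "\<And>x. lagrangian n Y A f g xh yh \<le> lagrangian n Y A f g x yh"
    using sp yhY unfolding saddle_point_def by blast
  obtain x1 where x1: "g x1 \<noteq> \<infinity>" using g_pcl unfolding eproper_on_def by auto
  have termne: "ereal (inner (A i x) (yh i)) - F i (yh i) \<noteq> \<infinity>" if "i \<in> {1..n}" for i x
    using F_nm[OF that] yhY that by (simp add: ereal_minus_eq_PInfty_iff)
  have "lagrangian n Y A f g x1 yh \<noteq> \<infinity>"
    unfolding lagrangian_def using termne x1 by (simp add: sum_Pinfty)
  then have Lne: "lagrangian n Y A f g xh yh \<noteq> \<infinity>" using sp2[of x1] by (metis ereal_infty_less_eq(1))
  have "g xh \<noteq> \<infinity>"
  proof
    assume "g xh = \<infinity>"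
    then have "lagrangian n Y A f g xh yh = \<infinity>" unfolding lagrangian_def by simp
    then show False using Lne by simp
  qed
  then obtain gx where gx: "g xh = ereal gx" using g_nm[of xh] by (cases "g xh") auto
  obtain yc where yc: "\<forall>i\<in>{1..n}. yc i \<in> Y i \<and> F i (yc i) \<noteq> \<infinity>" using F_some by metis
  have "\<forall>i\<in>{1..n}. \<exists>r. F i (yc i) = ereal r"
  proof
    fix i assume i: "i \<in> {1..n}"
    then show "\<exists>r. F i (yc i) = ereal r" using yc F_nm[OF i] by (cases "F i (yc i)") auto
  qed
  then obtain rc where rc: "\<forall>i\<in>{1..n}. F i (yc i) = ereal (rc i)" by metis
  have "lagrangian n Y A f g xh yc = ereal ((\<Sum>i=1..n. inner (A i xh) (yc i) - rc i) + gx)"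
    unfolding lagrangian_def using rc gx by (simp add: sum.cong[OF refl, of _ "\<lambda>i. ereal (inner (A i xh) (yc i) - rc i)"])
  then have Lnm: "lagrangian n Y A f g xh yh \<noteq> -\<infinity>" using sp1[of yc] yc
    by (metis MInfty_neq_ereal(1) ereal_infty_less_eq(2))
  have Ffin: "\<exists>r. F i (yh i) = ereal r" if i: "i \<in> {1..n}" for i
  proof (cases "F i (yh i)")
    case PInf
    have fin: "finite {1..n}" by simp
    have "(\<Sum>k=1..n. ereal (inner (A k xh) (yh k)) - F k (yh k))
        = (ereal (inner (A i xh) (yh i)) - F i (yh i)) + (\<Sum>k\<in>{1..n}-{i}. ereal (inner (A k xh) (yh k)) - F k (yh k))"
      using sum.remove[OF fin i] by blast
    also have "\<dots> = -\<infinity>" using PInf termne i by (simp add: sum_Pinfty)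
    finally have "lagrangian n Y A f g xh yh = -\<infinity>" unfolding lagrangian_def using gx by simp
    then show ?thesis using Lnm by simp
  qed (use F_nm yhY i in auto)
  then obtain c where c: "\<forall>i\<in>{1..n}. F i (yh i) = ereal (c i)" by metis
  have Lx: "lagrangian n Y A f g x yh = ereal (\<Sum>i=1..n. inner (A i x) (yh i) - c i) + g x" for x
    unfolding lagrangian_def using c by (simp add: sum.cong[OF refl, of _ "\<lambda>i. ereal (inner (A i x) (yh i) - c i)"])
  have S1: "ereal (gx + inner (- (\<Sum>i=1..n. adjoint (A i) (yh i))) (x - xh)) \<le> g x" for x
  proof (cases "g x")
    case (real gv)
    have "ereal (\<Sum>i=1..n. inner (A i xh) (yh i) - c i) + ereal gx \<le> ereal (\<Sum>i=1..n. inner (A i x) (yh i) - c i) + ereal gv"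
      using sp2[of x] Lx[of x] Lx[of xh] gx real by simp
    then have le: "(\<Sum>i=1..n. inner (A i xh) (yh i) - c i) + gx \<le> (\<Sum>i=1..n. inner (A i x) (yh i) - c i) + gv" by simp
    have "inner (- (\<Sum>i=1..n. adjoint (A i) (yh i))) (x - xh) = (\<Sum>i=1..n. inner (A i xh) (yh i) - inner (A i x) (yh i))"
    proof -
      have "inner (- (\<Sum>i=1..n. adjoint (A i) (yh i))) (x - xh) = - (\<Sum>i=1..n. inner (x - xh) (adjoint (A i) (yh i)))"
        by (simp add: inner_sum_left inner_sum_right inner_commute)
      also have "\<dots> = - (\<Sum>i=1..n. inner (A i x - A i xh) (yh i))"
        using A_lin by (auto simp: adjoint_works linear_diff intro!: sum.cong)
      also have "\<dots> = (\<Sum>i=1..n. inner (A i xh) (yh i) - inner (A i x) (yh i))"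
        by (simp add: inner_diff_left sum_subtractf)
      finally show ?thesis .
    qed
    also have "\<dots> = (\<Sum>i=1..n. inner (A i xh) (yh i) - c i) - (\<Sum>i=1..n. inner (A i x) (yh i) - c i)"
      by (simp add: sum_subtractf)
    finally show ?thesis using le real by simp
  next
    case MInf then show ?thesis using g_nm by simp
  qed simp
  have S2: "ereal (c i + inner (A i xh) (y - yh i)) \<le> F i y" if i: "i \<in> {1..n}" and y: "y \<in> Y i" for i y
  proof (cases "F i y")
    case (real r)
    define y' where "y' = yh(i := y)"
    have y'Y: "\<forall>k\<in>{1..n}. y' k \<in> Y k" using yhY y by (simp add: y'_def)
    define T where "T k = inner (A k xh) (yh k) - c k" for k
    define T' where "T' k = (if k = i then inner (A i xh) y - r else T k)" for k
    have "lagrangian n Y A f g xh y' = ereal ((\<Sum>k=1..n. T' k) + gx)"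
    proof -
      have "(\<Sum>k=1..n. ereal (inner (A k xh) (y' k)) - F k (y' k)) = (\<Sum>k=1..n. ereal (T' k))"
        by (rule sum.cong) (use c real in \<open>auto simp: y'_def T'_def T_def\<close>)
      then show ?thesis unfolding lagrangian_def using gx by simp
    qed
    moreover have "lagrangian n Y A f g xh yh = ereal ((\<Sum>k=1..n. T k) + gx)"
      using Lx[of xh] gx by (simp add: T_def)
    ultimately have "(\<Sum>k=1..n. T' k) \<le> (\<Sum>k=1..n. T k)" using sp1[OF y'Y] by simp
    moreover have "(\<Sum>k=1..n. T' k) = T' i + (\<Sum>k\<in>{1..n}-{i}. T' k)" using sum.remove[of "{1..n}" i] i by simp
    moreover have "(\<Sum>k=1..n. T k) = T i + (\<Sum>k\<in>{1..n}-{i}. T k)" using sum.remove[of "{1..n}" i] i by simp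
    moreover have "(\<Sum>k\<in>{1..n}-{i}. T' k) = (\<Sum>k\<in>{1..n}-{i}. T k)" by (simp add: T'_def)
    ultimately have "T' i \<le> T i" by simp
    then show ?thesis using real by (simp add: T'_def T_def inner_diff_right)
  next
    case MInf then show ?thesis using F_nm[OF i] y by simp
  qed simp
  show ?thesis using that[OF yhY gx] S1 c S2 by blast
qed

end


locale saddle_setting = setting n p \<sigma> \<tau> g f Y A
  for n :: nat and p \<sigma> :: "nat \<Rightarrow> real" and \<tau> :: real
    and g :: "'x::euclidean_space \<Rightarrow> ereal" and f :: "nat \<Rightarrow> 'y::euclidean_space \<Rightarrow> ereal"
    and Y :: "nat \<Rightarrow> 'y set" and A :: "nat \<Rightarrow> 'x \<Rightarrow> 'y" +
  fixes xh :: 'x and yh :: "nat \<Rightarrow> 'y" and gx :: real and c :: "nat \<Rightarrow> real"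
  assumes yhY: "\<forall>i\<in>{1..n}. yh i \<in> Y i" and gx: "g xh = ereal gx"
    and S1: "\<forall>x. ereal (gx + inner (- (\<Sum>i=1..n. adjoint (A i) (yh i))) (x - xh)) \<le> g x"
    and cF: "\<forall>i\<in>{1..n}. F i (yh i) = ereal (c i)"
    and S2: "\<forall>i\<in>{1..n}. \<forall>y\<in>Y i. ereal (c i + inner (A i xh) (y - yh i)) \<le> F i y"
begin

lemma MA:
  fixes v :: 'x
  defines "u \<equiv> prox UNIV \<tau> g v"
  shows "inner (v - u) (u - xh) \<ge> - \<tau> * inner (\<Sum>i=1..n. adjoint (A i) (yh i)) (u - xh)"
proof -
  define \<beta> where "\<beta> = - (\<Sum>i=1..n. adjoint (A i) (yh i))"
  have minor: "\<forall>x\<in>UNIV. ereal ((gx - inner \<beta> xh) + inner \<beta> x) \<le> g x"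
    using S1 unfolding \<beta>_def by (simp add: inner_diff_right algebra_simps)
  have cv: "econvex_on UNIV g" and lsc: "elsc_on UNIV g" using g_pcl by auto
  have gnm: "\<forall>x\<in>UNIV. g x \<noteq> -\<infinity>" using g_nm by simp
  from prox_props[OF tau_pos closed_UNIV cv gnm _ gx lsc minor, of v]
  obtain a where a: "g u = ereal a" "\<forall>w. ereal (a + inner (v - u) (w - u) / \<tau>) \<le> g w"
    unfolding u_def by auto
  have "a + inner (v - u) (xh - u) / \<tau> \<le> gx" using a(2)[rule_format, of xh] gx by simp
  moreover have "gx + inner \<beta> (u - xh) \<le> a" using S1[rule_format, of u] a(1) unfolding \<beta>_def by simp
  ultimately have "inner (v - u) (xh - u) / \<tau> \<le> - inner \<beta> (u - xh)" by linarith
  then have "inner (v - u) (xh - u) \<le> - \<tau> * inner \<beta> (u - xh)" using tau_pos by (simp add: field_simps)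
  moreover have "inner (v - u) (xh - u) = - inner (v - u) (u - xh)" by (simp add: inner_diff_right)
  ultimately show ?thesis unfolding \<beta>_def by simp
qed

lemma MB:
  fixes v :: 'y
  assumes i: "i \<in> {1..n}"
  defines "u \<equiv> prox (Y i) (\<sigma> i) (F i) v"
  shows "u \<in> Y i" "inner (v - u) (u - yh i) \<ge> \<sigma> i * inner (A i xh) (u - yh i)"
proof -
  have sub: "subspace (Y i)" using Y_sub i by auto
  have fp: "econvex_on (Y i) (f i)" "eproper_on (Y i) (f i)" "elsc_on (Y i) (f i)" using f_pcl i by auto
  obtain \<alpha> \<beta> where minor: "\<forall>x\<in>Y i. ereal (\<alpha> + inner \<beta> x) \<le> F i x" using conj_minor_ex[OF fp(2)] by blast
  have si: "\<sigma> i > 0" using sigma_pos i by auto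
  from prox_props[OF si closed_subspace[OF sub] conj_convex[OF sub fp(2)] F_nm[OF i] _ cF[rule_format, OF i]
      conj_lsc[OF fp(2)] minor, of v] yhY i
  obtain a where uY: "u \<in> Y i" and a: "F i u = ereal a" "\<forall>w\<in>Y i. ereal (a + inner (v - u) (w - u) / \<sigma> i) \<le> F i w"
    unfolding u_def by auto
  show "u \<in> Y i" by (rule uY)
  have "a + inner (v - u) (yh i - u) / \<sigma> i \<le> c i" using a(2) yhY i cF by force
  moreover have "c i + inner (A i xh) (u - yh i) \<le> a" using S2 i uY a(1) by force
  ultimately have "inner (v - u) (yh i - u) / \<sigma> i \<le> - inner (A i xh) (u - yh i)" by linarith
  then have "inner (v - u) (yh i - u) \<le> - \<sigma> i * inner (A i xh) (u - yh i)" using si by (simp add: field_simps)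
  moreover have "inner (v - u) (yh i - u) = - inner (v - u) (u - yh i)" by (simp add: inner_diff_right)
  ultimately show "inner (v - u) (u - yh i) \<ge> \<sigma> i * inner (A i xh) (u - yh i)" by simp
qed

end


definition Vf :: "nat \<Rightarrow> (nat \<Rightarrow> real) \<Rightarrow> real \<Rightarrow> (nat \<Rightarrow> real) \<Rightarrow> (nat \<Rightarrow> 'x::real_inner \<Rightarrow> 'y::real_inner)
   \<Rightarrow> 'x \<Rightarrow> (nat \<Rightarrow> 'y) \<Rightarrow> 'x \<times> (nat \<Rightarrow> 'y) \<Rightarrow> real" where
  "Vf n p \<tau> \<sigma> A xh yh w = (norm (fst w - xh))\<^sup>2 / (2*\<tau>) + (\<Sum>i=1..n. (norm (snd w i - yh i))\<^sup>2 / (2*\<sigma> i*p i))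
     + (\<Sum>i=1..n. inner (A i (fst w - xh)) (snd w i - yh i))"

lemma sum_upd:
  fixes G :: "'i \<Rightarrow> 'b \<Rightarrow> real"
  assumes "finite S" "j \<in> S"
  shows "(\<Sum>i\<in>S. G i ((y(j:=a)) i)) = (\<Sum>i\<in>S. G i (y i)) + G j a - G j (y j)"
proof -
  have "(\<Sum>i\<in>S. G i ((y(j:=a)) i)) = G j a + (\<Sum>i\<in>S-{j}. G i ((y(j:=a)) i))"
    using sum.remove[OF assms, of "\<lambda>i. G i ((y(j:=a)) i)"] by simp
  also have "(\<Sum>i\<in>S-{j}. G i ((y(j:=a)) i)) = (\<Sum>i\<in>S-{j}. G i (y i))" by (rule sum.cong) auto
  also have "(\<Sum>i\<in>S. G i (y i)) = G j (y j) + (\<Sum>i\<in>S-{j}. G i (y i))"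
    using sum.remove[OF assms, of "\<lambda>i. G i (y i)"] by simp
  ultimately show ?thesis by simp
qed

lemma inner_half:
  fixes a b :: "'a::real_inner"
  shows "inner (a - b) b = ((norm a)\<^sup>2 - (norm b)\<^sup>2 - (norm (a - b))\<^sup>2) / 2"
  unfolding power2_norm_eq_inner by (simp add: inner_diff_left inner_diff_right inner_commute)

lemma quad_ineq:
  fixes \<alpha> \<beta> L a b :: real
  assumes "\<alpha> \<ge> 0" "\<beta> \<ge> 0" "L \<ge> 0" "L\<^sup>2 \<le> 4*\<alpha>*\<beta>" "a \<ge> 0" "b \<ge> 0"
  shows "L*a*b \<le> \<alpha>*a\<^sup>2 + \<beta>*b\<^sup>2"
proof -
  define X where "X = \<alpha>*a\<^sup>2"
  define Z where "Z = \<beta>*b\<^sup>2"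
  have "(L*a*b)\<^sup>2 = L\<^sup>2*(a\<^sup>2*b\<^sup>2)" by (simp add: power_mult_distrib)
  also have "\<dots> \<le> (4*\<alpha>*\<beta>)*(a\<^sup>2*b\<^sup>2)" using assms by (intro mult_right_mono) auto
  also have "\<dots> = 4*(X*Z)" by (simp add: X_def Z_def mult_ac)
  also have "\<dots> \<le> (X+Z)\<^sup>2"
  proof -
    have "(X+Z)\<^sup>2 = (X-Z)\<^sup>2 + 4*(X*Z)" by (simp add: power2_sum power2_diff)
    moreover have "0 \<le> (X-Z)\<^sup>2" by simp
    ultimately show ?thesis by linarith
  qed
  finally have h: "(L*a*b)\<^sup>2 \<le> (X+Z)\<^sup>2" .
  have "0 \<le> X + Z" using assms by (simp add: X_def Z_def)
  from power2_le_imp_le[OF h this] show ?thesis by (simp add: X_def Z_def)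
qed

definition kfun :: "real \<Rightarrow> real \<Rightarrow> real \<Rightarrow> real" where
  "kfun P Q L = (4*P*Q - L\<^sup>2) / (4*(P+Q))"

lemma kfun_pos: "P > 0 \<Longrightarrow> Q > 0 \<Longrightarrow> L\<^sup>2 < 4*P*Q \<Longrightarrow> kfun P Q L > 0"
  unfolding kfun_def by (simp add: divide_pos_pos)

lemma kfun_ineq:
  fixes P Q L a b :: real
  assumes P: "P > 0" and Q: "Q > 0" and L: "L \<ge> 0" "L\<^sup>2 < 4*P*Q" and a: "a \<ge> 0" and b: "b \<ge> 0"
  shows "kfun P Q L * (a\<^sup>2 + b\<^sup>2) \<le> P*a\<^sup>2 + Q*b\<^sup>2 - L*a*b"
proof -
  define k where "k = kfun P Q L"
  have kPQ: "k * (P + Q) = P*Q - L\<^sup>2/4" using P Q unfolding k_def kfun_def by (simp add: field_simps)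
  have k0: "k > 0" unfolding k_def using kfun_pos[OF P Q L(2)] .
  have sq: "0 \<le> L\<^sup>2" "0 \<le> P*P" "0 \<le> Q*Q" by simp_all
  have e1: "P * (P + Q) = P*P + P*Q" by (simp add: algebra_simps)
  have e2: "Q * (P + Q) = Q*Q + P*Q" by (simp add: algebra_simps)
  have l4: "0 \<le> L\<^sup>2/4" by simp
  have kp1: "k * (P + Q) \<le> P * (P + Q)" unfolding e1 kPQ using l4 sq(2) by argo
  have kp2: "k * (P + Q) \<le> Q * (P + Q)" unfolding e2 kPQ using l4 sq(3) by argo
  have kP: "k \<le> P" using kp1 P Q by (simp add: mult_le_cancel_right_pos)
  have kQ: "k \<le> Q" using kp2 P Q by (simp add: mult_le_cancel_right_pos)
  have "L\<^sup>2 \<le> 4*(P - k)*(Q - k)"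
  proof -
    have "4*(P - k)*(Q - k) = 4*(P*Q) - 4*(k*(P+Q)) + 4*k*k" by (simp add: algebra_simps)
    also have "\<dots> = L\<^sup>2 + 4*k*k" using kPQ by simp
    finally show ?thesis using k0 by simp
  qed
  from quad_ineq[OF _ _ L(1) this a b] kP kQ
  have "L*a*b \<le> (P - k)*a\<^sup>2 + (Q - k)*b\<^sup>2" by simp
  moreover have "k*(a\<^sup>2+b\<^sup>2) = k*a\<^sup>2 + k*b\<^sup>2" by (simp add: distrib_left)
  moreover have "(P-k)*a\<^sup>2 = P*a\<^sup>2 - k*a\<^sup>2" by (simp add: left_diff_distrib)
  moreover have "(Q-k)*b\<^sup>2 = Q*b\<^sup>2 - k*b\<^sup>2" by (simp add: left_diff_distrib)
  ultimately have "k*(a\<^sup>2+b\<^sup>2) \<le> P*a\<^sup>2 + Q*b\<^sup>2 - L*a*b" by argo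
  then show ?thesis unfolding k_def .
qed

context saddle_setting
begin

abbreviation V where "V \<equiv> Vf n p \<tau> \<sigma> A xh yh"

lemma n_pos: "n \<ge> 1"
  using p_sum by (cases n) auto

lemma step_j:
  assumes j: "j \<in> {1..n}" and yY: "\<forall>i\<in>{1..n}. y i \<in> Y i"
  shows "p j * V (Top n p \<tau> \<sigma> g f Y A j (x,y))
     + kfun (p j/(2*\<tau>)) (1/(2*\<sigma> j)) (onorm (A j)) * sqnorm n (wdiff (Top n p \<tau> \<sigma> g f Y A j (x,y)) (x,y))
   \<le> p j * ((norm (x - xh))\<^sup>2/(2*\<tau>) + (\<Sum>i=1..n. (norm (y i - yh i))\<^sup>2/(2*\<sigma> i * p i)))
     + inner (A j (x - xh)) (y j - yh j)"
proof -
  define yj where "yj = prox (Y j) (\<sigma> j) (F j) (y j + \<sigma> j *\<^sub>R A j x)"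
  define S where "S = (\<Sum>i=1..n. adjoint (A i) (y i))"
  define Sh where "Sh = (\<Sum>i=1..n. adjoint (A i) (yh i))"
  define v where "v = x - \<tau> *\<^sub>R S - ((1 + 1/p j)*\<tau>) *\<^sub>R adjoint (A j) (yj - y j)"
  define x' where "x' = prox UNIV \<tau> g v"
  have T: "Top n p \<tau> \<sigma> g f Y A j (x,y) = (x', y(j:=yj))"
    by (simp add: Top_def Let_def yj_def x'_def v_def S_def)
  have pj: "p j > 0" using p_pos j by auto
  have sj: "\<sigma> j > 0" using sigma_pos j by auto
  have lin: "\<And>i. i \<in> {1..n} \<Longrightarrow> linear (A i)" using A_lin by auto
  have linj: "linear (A j)" using lin j .
  have MBj: "inner ((y j + \<sigma> j *\<^sub>R A j x) - yj) (yj - yh j) \<ge> \<sigma> j * inner (A j xh) (yj - yh j)"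
    using MB(2)[OF j] unfolding yj_def .
  have MAj: "inner (v - x') (x' - xh) \<ge> - \<tau> * inner Sh (x' - xh)"
    using MA unfolding x'_def Sh_def .
  define E where "E = (norm (x - xh))\<^sup>2"
  define Dn where "Dn = (norm (x' - xh))\<^sup>2"
  define Xn where "Xn = (norm (x' - x))\<^sup>2"
  define dn where "dn = (norm (y j - yh j))\<^sup>2"
  define dpn where "dpn = (norm (yj - yh j))\<^sup>2"
  define Dl where "Dl = (norm (yj - y j))\<^sup>2"
  define AdS where "AdS = (\<Sum>i=1..n. inner (A i (x' - xh)) (y i - yh i))"
  define AD where "AD = inner (A j (x' - xh)) (yj - y j)"
  define Aep where "Aep = inner (A j (x - xh)) (yj - yh j)"
  define Aed where "Aed = inner (A j (x - xh)) (y j - yh j)"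
  define R where "R = inner (A j (x' - x)) (yj - y j)"
  define Sd where "Sd = (\<Sum>i=1..n. (norm (y i - yh i))\<^sup>2/(2*\<sigma> i * p i))"
  define c1 where "c1 = (1 + 1/p j)*\<tau>"
  have i1: "inner (v - x') (x' - xh) = inner (x - x') (x' - xh) - \<tau> * inner S (x' - xh)
      - c1 * inner (adjoint (A j) (yj - y j)) (x' - xh)"
    unfolding v_def c1_def by (simp add: inner_diff_left)
  have adjS: "inner (\<Sum>i=1..n. adjoint (A i) (z i)) w = (\<Sum>i=1..n. inner (A i w) (z i))" for z w
    unfolding inner_sum_left using lin by (auto simp: inner_commute adjoint_works intro!: sum.cong)
  have i2: "inner S (x' - xh) - inner Sh (x' - xh) = AdS"
    unfolding S_def Sh_def AdS_def adjS by (simp add: sum_subtractf inner_diff_right)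
  have i3: "inner (adjoint (A j) (yj - y j)) (x' - xh) = AD"
    unfolding AD_def using linj by (simp add: inner_commute adjoint_works)
  have i4: "inner (x - x') (x' - xh) = (E - Dn - Xn)/2"
  proof -
    have "inner (x - x') (x' - xh) = inner ((x - xh) - (x' - xh)) (x' - xh)" by simp
    also have "\<dots> = ((norm (x - xh))\<^sup>2 - (norm (x' - xh))\<^sup>2 - (norm ((x - xh) - (x' - xh)))\<^sup>2)/2"
      by (rule inner_half)
    finally show ?thesis unfolding E_def Dn_def Xn_def by (simp add: norm_minus_commute)
  qed
  have i2': "\<tau> * inner S (x' - xh) - \<tau> * inner Sh (x' - xh) = \<tau> * AdS"
    using i2 by (metis right_diff_distrib)
  have i3': "c1 * inner (adjoint (A j) (yj - y j)) (x' - xh) = c1 * AD" using i3 by simp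
  have i5: "- \<tau> * inner Sh (x' - xh) = - (\<tau> * inner Sh (x' - xh))" by simp
  have H1: "\<tau> * AdS + c1 * AD \<le> (E - Dn - Xn)/2"
    using MAj i1 i2' i3' i4 i5 by linarith
  have j1: "inner ((y j + \<sigma> j *\<^sub>R A j x) - yj) (yj - yh j) = inner (y j - yj) (yj - yh j) + \<sigma> j * inner (A j x) (yj - yh j)"
    by (simp add: inner_diff_left inner_add_left algebra_simps)
  have j2: "inner (A j x) (yj - yh j) - inner (A j xh) (yj - yh j) = Aep"
    unfolding Aep_def using linj by (simp add: linear_diff inner_diff_left)
  have j2': "\<sigma> j * inner (A j x) (yj - yh j) - \<sigma> j * inner (A j xh) (yj - yh j) = \<sigma> j * Aep"
    using j2 by (metis right_diff_distrib)
  have j3: "inner (y j - yj) (yj - yh j) = (dn - dpn - Dl)/2"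
  proof -
    have "inner (y j - yj) (yj - yh j) = inner ((y j - yh j) - (yj - yh j)) (yj - yh j)" by simp
    also have "\<dots> = ((norm (y j - yh j))\<^sup>2 - (norm (yj - yh j))\<^sup>2 - (norm ((y j - yh j) - (yj - yh j)))\<^sup>2)/2"
      by (rule inner_half)
    finally show ?thesis unfolding dn_def dpn_def Dl_def by (simp add: norm_minus_commute)
  qed
  have H2: "(dn - dpn - Dl)/2 \<ge> - \<sigma> j * Aep"
  proof -
    have "- \<sigma> j * Aep = - (\<sigma> j * Aep)" by simp
    then show ?thesis using MBj j1 j2' j3 by linarith
  qed
  have H3: "V (x', y(j:=yj)) = Dn/(2*\<tau>) + Sd + (dpn - dn)/(2*\<sigma> j * p j) + AdS + AD"
  proof -
    have fin: "finite {1..n}" by simp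
    have s1: "(\<Sum>i=1..n. (norm ((y(j:=yj)) i - yh i))\<^sup>2/(2*\<sigma> i * p i)) = Sd + dpn/(2*\<sigma> j * p j) - dn/(2*\<sigma> j * p j)"
      using sum_upd[OF fin j, of "\<lambda>i z. (norm (z - yh i))\<^sup>2/(2*\<sigma> i * p i)" y yj]
      unfolding Sd_def dpn_def dn_def by simp
    have s2: "(\<Sum>i=1..n. inner (A i (x' - xh)) ((y(j:=yj)) i - yh i)) = AdS + AD"
      using sum_upd[OF fin j, of "\<lambda>i z. inner (A i (x' - xh)) (z - yh i)" y yj]
      unfolding AdS_def AD_def by (simp add: inner_diff_right)
    show ?thesis unfolding Vf_def using s1 s2 by (simp add: Dn_def diff_divide_distrib)
  qed
  have H4: "Aep - AD = Aed - R"
  proof -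
    have "A j (x - xh) - A j (x' - xh) = - A j (x' - x)" using linj by (simp add: linear_diff)
    then have "inner (A j (x - xh)) (yj - y j) - AD = - R"
      unfolding AD_def R_def by (metis inner_diff_left inner_minus_left)
    moreover have "Aep = Aed + inner (A j (x - xh)) (yj - y j)"
      unfolding Aep_def Aed_def by (simp add: inner_diff_right)
    ultimately show ?thesis by linarith
  qed
  have H5: "sqnorm n (wdiff (x', y(j:=yj)) (x,y)) = Xn + Dl"
  proof -
    have fin: "finite {1..n}" by simp
    have "(\<Sum>i=1..n. (norm ((y(j:=yj)) i - y i))\<^sup>2) = Dl"
      using sum_upd[OF fin j, of "\<lambda>i z. (norm (z - y i))\<^sup>2" y yj] unfolding Dl_def by simp
    then show ?thesis unfolding sqnorm_def wdiff_def Xn_def by simp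
  qed
  define L where "L = onorm (A j)"
  define a where "a = norm (x' - x)"
  define b where "b = norm (yj - y j)"
  have H6: "- (L*a*b) \<le> R"
  proof -
    have bl: "bounded_linear (A j)" using linj by (simp add: linear_conv_bounded_linear)
    have "\<bar>R\<bar> \<le> norm (A j (x' - x)) * norm (yj - y j)" unfolding R_def by (rule Cauchy_Schwarz_ineq2)
    also have "\<dots> \<le> (L * norm (x' - x)) * norm (yj - y j)"
      unfolding L_def by (intro mult_right_mono onorm[OF bl]) auto
    finally show ?thesis unfolding a_def b_def by linarith
  qed
  define P2 where "P2 = p j/(2*\<tau>)"
  define Q2 where "Q2 = 1/(2*\<sigma> j)"
  define k where "k = kfun P2 Q2 L"
  have L0: "L \<ge> 0" unfolding L_def using linj by (simp add: onorm_pos_le linear_conv_bounded_linear)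
  have Lb: "L\<^sup>2 < 4*P2*Q2"
  proof -
    have "\<tau> * \<sigma> j * L\<^sup>2 < p j" using steps j unfolding L_def by auto
    moreover have "4*P2*Q2 = p j / (\<tau> * \<sigma> j)" unfolding P2_def Q2_def using tau_pos sj by (simp add: field_simps)
    moreover have "0 < \<tau> * \<sigma> j" using tau_pos sj by simp
    ultimately show ?thesis by (simp add: pos_less_divide_eq mult.commute mult.left_commute)
  qed
  have P20: "P2 > 0" unfolding P2_def using pj tau_pos by simp
  have Q20: "Q2 > 0" unfolding Q2_def using sj by simp
  have H7: "k * (a\<^sup>2 + b\<^sup>2) \<le> P2*a\<^sup>2 + Q2*b\<^sup>2 - L*a*b"
    unfolding k_def by (rule kfun_ineq[OF P20 Q20 L0 Lb]) (simp_all add: a_def b_def)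
  have ab: "a\<^sup>2 = Xn" "b\<^sup>2 = Dl" unfolding a_def b_def Xn_def Dl_def by simp_all
  have sc1: "p j * AdS + p j * AD + AD \<le> P2*E - P2*Dn - P2*Xn"
  proof -
    have "(p j/\<tau>) * (\<tau> * AdS + c1 * AD) \<le> (p j/\<tau>) * ((E - Dn - Xn)/2)"
      using H1 pj tau_pos by (intro mult_left_mono) auto
    moreover have "(p j/\<tau>) * (\<tau> * AdS + c1 * AD) = p j * AdS + p j * AD + AD"
      unfolding c1_def using pj tau_pos by (simp add: field_simps)
    moreover have "(p j/\<tau>) * ((E - Dn - Xn)/2) = P2*E - P2*Dn - P2*Xn"
      unfolding P2_def using tau_pos by (simp add: field_simps)
    ultimately show ?thesis by simp
  qed
  have sc2: "Q2*dpn - Q2*dn \<le> Aep - Q2*Dl"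
  proof -
    have "(1/\<sigma> j) * (- \<sigma> j * Aep) \<le> (1/\<sigma> j) * ((dn - dpn - Dl)/2)"
      using H2 sj by (intro mult_left_mono) auto
    moreover have "(1/\<sigma> j) * (- \<sigma> j * Aep) = - Aep" using sj by simp
    moreover have "(1/\<sigma> j) * ((dn - dpn - Dl)/2) = Q2*dn - Q2*dpn - Q2*Dl"
      unfolding Q2_def using sj by (simp add: field_simps)
    ultimately show ?thesis by simp
  qed
  have sc3: "p j * V (x', y(j:=yj)) = P2*Dn + p j * Sd + Q2*dpn - Q2*dn + p j * AdS + p j * AD"
    unfolding H3 P2_def Q2_def using pj tau_pos sj by (simp add: field_simps)
  have goalR: "p j * ((norm (x - xh))\<^sup>2/(2*\<tau>) + (\<Sum>i=1..n. (norm (y i - yh i))\<^sup>2/(2*\<sigma> i * p i)))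
     + inner (A j (x - xh)) (y j - yh j) = P2*E + p j * Sd + Aed"
    unfolding P2_def E_def Sd_def Aed_def by (simp add: field_simps)
  have kk: "k * (Xn + Dl) = k * Xn + k * Dl" by (simp add: distrib_left)
  have fin: "p j * V (x', y(j:=yj)) + k * (Xn + Dl) \<le> P2*E + p j * Sd + Aed"
    using sc1 sc2 sc3 H4 H6 H7 ab kk by (simp only:)
  show ?thesis unfolding T H5 goalR using fin unfolding k_def P2_def Q2_def L_def .
qed

end



lemma sum_updv:
  fixes G :: "'i \<Rightarrow> 'b \<Rightarrow> 'c::ab_group_add"
  assumes "finite S" "j \<in> S"
  shows "(\<Sum>i\<in>S. G i ((y(j:=a)) i)) = (\<Sum>i\<in>S. G i (y i)) + G j a - G j (y j)"
proof -
  have "(\<Sum>i\<in>S. G i ((y(j:=a)) i)) = G j a + (\<Sum>i\<in>S-{j}. G i ((y(j:=a)) i))"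
    using sum.remove[OF assms, of "\<lambda>i. G i ((y(j:=a)) i)"] by simp
  also have "(\<Sum>i\<in>S-{j}. G i ((y(j:=a)) i)) = (\<Sum>i\<in>S-{j}. G i (y i))" by (rule sum.cong) auto
  also have "(\<Sum>i\<in>S. G i (y i)) = G j (y j) + (\<Sum>i\<in>S-{j}. G i (y i))"
    using sum.remove[OF assms, of "\<lambda>i. G i (y i)"] by simp
  ultimately show ?thesis by (simp add: algebra_simps)
qed

lemma spdhg_local:
  "(\<forall>m<k. js m = js' m) \<Longrightarrow> spdhg p \<tau> \<sigma> g f Y A x0 js k = spdhg p \<tau> \<sigma> g f Y A x0 js' k"
  by (induction k) auto

lemma spdhg_fst_Suc:
  "fst (spdhg p \<tau> \<sigma> g f Y A x0 js (Suc k)) =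
     prox UNIV \<tau> g (fst (spdhg p \<tau> \<sigma> g f Y A x0 js k) - \<tau> *\<^sub>R snd (snd (snd (spdhg p \<tau> \<sigma> g f Y A x0 js k))))"
  by (cases "spdhg p \<tau> \<sigma> g f Y A x0 js k") (auto simp: Let_def)

definition ust where
  "ust p \<tau> \<sigma> g f Y A x0 js k = (fst (spdhg p \<tau> \<sigma> g f Y A x0 js (Suc k)), fst (snd (spdhg p \<tau> \<sigma> g f Y A x0 js k)))"

lemma ust_local:
  "(\<forall>m<k. js m = js' m) \<Longrightarrow> ust p \<tau> \<sigma> g f Y A x0 js k = ust p \<tau> \<sigma> g f Y A x0 js' k"
proof -
  assume a: "\<forall>m<k. js m = js' m"
  have "spdhg p \<tau> \<sigma> g f Y A x0 js k = spdhg p \<tau> \<sigma> g f Y A x0 js' k" using spdhg_local[OF a] .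
  then show ?thesis unfolding ust_def spdhg_fst_Suc by simp
qed

lemma vec_id:
  fixes x Z D :: "'a::real_vector"
  shows "x - t *\<^sub>R (Z + D + c *\<^sub>R D) = x - t *\<^sub>R Z - ((1 + c) * t) *\<^sub>R D"
  by (simp add: algebra_simps scaleR_add_right scaleR_add_left)

context saddle_setting
begin

lemma spdhg_inv:
  assumes "\<forall>m<k. js m \<in> {1..n}"
  shows "(\<forall>i\<in>{1..n}. fst (snd (spdhg p \<tau> \<sigma> g f Y A x0 js k)) i \<in> Y i) \<and>
    fst (snd (snd (spdhg p \<tau> \<sigma> g f Y A x0 js k))) = (\<Sum>i=1..n. adjoint (A i) (fst (snd (spdhg p \<tau> \<sigma> g f Y A x0 js k)) i))"
  using assms
proof (induction k)
  case 0
  have "\<forall>i\<in>{1..n}. (0::'y) \<in> Y i" using Y_sub by (auto simp: subspace_0)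
  moreover have "\<forall>i\<in>{1..n}. adjoint (A i) 0 = (0::'x)" using A_lin by (auto simp: linear_0 adjoint_linear)
  ultimately show ?case by simp
next
  case (Suc k)
  obtain x y z zb where st: "spdhg p \<tau> \<sigma> g f Y A x0 js k = (x, y, z, zb)" by (cases "spdhg p \<tau> \<sigma> g f Y A x0 js k") auto
  have IH: "(\<forall>i\<in>{1..n}. y i \<in> Y i) \<and> z = (\<Sum>i=1..n. adjoint (A i) (y i))" using Suc st by simp
  define j where "j = js k"
  have j: "j \<in> {1..n}" using Suc.prems by (simp add: j_def)
  define x' where "x' = prox UNIV \<tau> g (x - \<tau> *\<^sub>R zb)"
  define yj where "yj = prox (Y j) (\<sigma> j) (F j) (y j + \<sigma> j *\<^sub>R A j x')"
  have st': "spdhg p \<tau> \<sigma> g f Y A x0 js (Suc k) = (x', y(j:=yj), z + adjoint (A j) (yj - y j),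
       z + adjoint (A j) (yj - y j) + (1 / p j) *\<^sub>R adjoint (A j) (yj - y j))"
    by (simp add: st Let_def j_def x'_def yj_def)
  have yjY: "yj \<in> Y j" unfolding yj_def by (rule MB(1)[OF j])
  have lj: "linear (adjoint (A j))" using A_lin j by (auto intro: adjoint_linear)
  have "(\<Sum>i=1..n. adjoint (A i) ((y(j:=yj)) i)) = (\<Sum>i=1..n. adjoint (A i) (y i)) + adjoint (A j) yj - adjoint (A j) (y j)"
    using sum_updv[of "{1..n}" j "\<lambda>i z. adjoint (A i) z" y yj] j by simp
  also have "\<dots> = z + adjoint (A j) (yj - y j)" using IH lj by (simp add: linear_diff)
  finally show ?case using st' IH yjY by auto
qed

lemma ust_step:
  assumes "\<forall>m\<le>k. js m \<in> {1..n}"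
  shows "ust p \<tau> \<sigma> g f Y A x0 js (Suc k) = Top n p \<tau> \<sigma> g f Y A (js k) (ust p \<tau> \<sigma> g f Y A x0 js k)"
proof -
  obtain x y z zb where st: "spdhg p \<tau> \<sigma> g f Y A x0 js k = (x, y, z, zb)" by (cases "spdhg p \<tau> \<sigma> g f Y A x0 js k") auto
  have IH: "z = (\<Sum>i=1..n. adjoint (A i) (y i))" using spdhg_inv[of k js x0] assms st by auto
  define j where "j = js k"
  have j: "j \<in> {1..n}" using assms by (simp add: j_def)
  define x' where "x' = prox UNIV \<tau> g (x - \<tau> *\<^sub>R zb)"
  define yj where "yj = prox (Y j) (\<sigma> j) (F j) (y j + \<sigma> j *\<^sub>R A j x')"
  have st': "spdhg p \<tau> \<sigma> g f Y A x0 js (Suc k) = (x', y(j:=yj), z + adjoint (A j) (yj - y j),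
       z + adjoint (A j) (yj - y j) + (1 / p j) *\<^sub>R adjoint (A j) (yj - y j))"
    by (simp add: st Let_def j_def x'_def yj_def)
  have u: "ust p \<tau> \<sigma> g f Y A x0 js k = (x', y)" unfolding ust_def spdhg_fst_Suc by (simp add: st x'_def)
  have eq: "x' - \<tau> *\<^sub>R (z + adjoint (A j) (yj - y j) + (1 / p j) *\<^sub>R adjoint (A j) (yj - y j))
      = x' - \<tau> *\<^sub>R (\<Sum>i=1..n. adjoint (A i) (y i)) - ((1 + 1 / p j) * \<tau>) *\<^sub>R adjoint (A j) (yj - y j)"
    using vec_id[of x' \<tau> z "adjoint (A j) (yj - y j)" "1 / p j"] IH by simp
  have us: "ust p \<tau> \<sigma> g f Y A x0 js (Suc k) =
      (prox UNIV \<tau> g (x' - \<tau> *\<^sub>R (z + adjoint (A j) (yj - y j) + (1 / p j) *\<^sub>R adjoint (A j) (yj - y j))), y(j:=yj))"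
    unfolding ust_def spdhg_fst_Suc st' by simp
  have tp: "Top n p \<tau> \<sigma> g f Y A j (x', y) =
      (prox UNIV \<tau> g (x' - \<tau> *\<^sub>R (\<Sum>i=1..n. adjoint (A i) (y i)) - ((1 + 1 / p j) * \<tau>) *\<^sub>R adjoint (A j) (yj - y j)), y(j:=yj))"
    by (simp add: Top_def Let_def yj_def)
  show ?thesis unfolding u j_def[symmetric] us tp eq by (rule refl)
qed

end


lemma sqnorm_nonneg: "sqnorm n w \<ge> 0"
  unfolding sqnorm_def by (intro add_nonneg_nonneg sum_nonneg) auto

context saddle_setting
begin

lemma psum_mult: "(\<Sum>i=1..n. p i * (t::real)) = t"
  using p_sum by (simp add: sum_distrib_right[symmetric])

abbreviation kj where "kj j \<equiv> kfun (p j/(2*\<tau>)) (1/(2*\<sigma> j)) (onorm (A j))"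

definition kap where "kap = Min (kj ` {1..n})"

lemma kj_pos:
  assumes j: "j \<in> {1..n}"
  shows "kj j > 0"
proof -
  have pj: "p j > 0" using p_pos j by auto
  have sj: "\<sigma> j > 0" using sigma_pos j by auto
  have "\<tau> * \<sigma> j * (onorm (A j))\<^sup>2 < p j" using steps j by auto
  moreover have "4*(p j/(2*\<tau>))*(1/(2*\<sigma> j)) = p j / (\<tau> * \<sigma> j)" using tau_pos sj by (simp add: field_simps)
  moreover have "0 < \<tau> * \<sigma> j" using tau_pos sj by simp
  ultimately have "(onorm (A j))\<^sup>2 < 4*(p j/(2*\<tau>))*(1/(2*\<sigma> j))"
    by (simp add: pos_less_divide_eq mult.commute mult.left_commute)
  then show ?thesis using pj tau_pos sj by (intro kfun_pos) auto
qed

lemma kap_pos: "kap > 0"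
  unfolding kap_def using n_pos kj_pos by (subst Min_gr_iff) auto

lemma kap_le: "j \<in> {1..n} \<Longrightarrow> kap \<le> kj j"
  unfolding kap_def by (rule Min_le) auto

lemma lyap:
  assumes yY: "\<forall>i\<in>{1..n}. y i \<in> Y i"
  shows "(\<Sum>j=1..n. p j * V (Top n p \<tau> \<sigma> g f Y A j (x,y)))
     + kap * (\<Sum>j=1..n. sqnorm n (wdiff (Top n p \<tau> \<sigma> g f Y A j (x,y)) (x,y))) \<le> V (x,y)"
proof -
  define W where "W = (norm (x - xh))\<^sup>2/(2*\<tau>) + (\<Sum>i=1..n. (norm (y i - yh i))\<^sup>2/(2*\<sigma> i * p i))"
  define sq where "sq j = sqnorm n (wdiff (Top n p \<tau> \<sigma> g f Y A j (x,y)) (x,y))" for j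
  have "(\<Sum>j=1..n. p j * V (Top n p \<tau> \<sigma> g f Y A j (x,y)) + kj j * sq j)
      \<le> (\<Sum>j=1..n. p j * W + inner (A j (x - xh)) (y j - yh j))"
    unfolding W_def sq_def by (intro sum_mono step_j yY) auto
  also have "\<dots> = V (x,y)" unfolding sum.distrib psum_mult unfolding Vf_def W_def by simp
  finally have a: "(\<Sum>j=1..n. p j * V (Top n p \<tau> \<sigma> g f Y A j (x,y))) + (\<Sum>j=1..n. kj j * sq j) \<le> V (x,y)"
    by (simp add: sum.distrib)
  have "kap * (\<Sum>j=1..n. sq j) = (\<Sum>j=1..n. kap * sq j)" by (simp add: sum_distrib_left)
  also have "\<dots> \<le> (\<Sum>j=1..n. kj j * sq j)"
    by (intro sum_mono mult_right_mono kap_le) (auto simp: sq_def sqnorm_nonneg)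
  finally show ?thesis using a unfolding sq_def by linarith
qed

lemma p_le1: "i \<in> {1..n} \<Longrightarrow> p i \<le> 1"
  using member_le_sum[of i "{1..n}" p] p_pos p_sum by (simp add: less_imp_le)

lemma V_nonneg: "V w \<ge> 0"
proof -
  obtain x y where w: "w = (x, y)" by (cases w)
  define e where "e = x - xh"
  have "V w = (\<Sum>i=1..n. p i * ((norm e)\<^sup>2/(2*\<tau>)) + (norm (y i - yh i))\<^sup>2/(2*\<sigma> i * p i) + inner (A i e) (y i - yh i))"
    unfolding sum.distrib psum_mult unfolding Vf_def w e_def by simp
  also have "\<dots> \<ge> 0"
  proof (intro sum_nonneg)
    fix i assume i: "i \<in> {1..n}"
    have pi: "p i > 0" "p i \<le> 1" using p_pos i p_le1[OF i] by auto
    have si: "\<sigma> i > 0" using sigma_pos i by auto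
    define L where "L = onorm (A i)"
    have bl: "bounded_linear (A i)" using A_lin i by (simp add: linear_conv_bounded_linear)
    have L0: "L \<ge> 0" unfolding L_def using bl by (simp add: onorm_pos_le)
    have "\<bar>inner (A i e) (y i - yh i)\<bar> \<le> norm (A i e) * norm (y i - yh i)" by (rule Cauchy_Schwarz_ineq2)
    also have "\<dots> \<le> (L * norm e) * norm (y i - yh i)"
      unfolding L_def by (intro mult_right_mono onorm[OF bl]) auto
    finally have ci: "- (L * norm e * norm (y i - yh i)) \<le> inner (A i e) (y i - yh i)" by linarith
    have st: "\<tau> * \<sigma> i * L\<^sup>2 < p i" using steps i unfolding L_def by auto
    have "4 * (p i / (2*\<tau>)) * (1 / (2*\<sigma> i * p i)) = 1 / (\<tau> * \<sigma> i)" using pi tau_pos si by (simp add: field_simps)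
    moreover have "L\<^sup>2 \<le> 1 / (\<tau> * \<sigma> i)"
    proof -
      have "\<tau> * \<sigma> i * L\<^sup>2 \<le> 1" using st pi by linarith
      moreover have "0 < \<tau> * \<sigma> i" using tau_pos si by simp
      ultimately show ?thesis by (simp add: pos_le_divide_eq mult.commute mult.left_commute)
    qed
    ultimately have "L\<^sup>2 \<le> 4 * (p i / (2*\<tau>)) * (1 / (2*\<sigma> i * p i))" by simp
    from quad_ineq[OF _ _ L0 this norm_ge_zero norm_ge_zero] pi tau_pos si
    have "L * norm e * norm (y i - yh i) \<le> (p i / (2*\<tau>)) * (norm e)\<^sup>2 + (1 / (2*\<sigma> i * p i)) * (norm (y i - yh i))\<^sup>2"
      by simp
    then show "0 \<le> p i * ((norm e)\<^sup>2/(2*\<tau>)) + (norm (y i - yh i))\<^sup>2/(2*\<sigma> i * p i) + inner (A i e) (y i - yh i)"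
      using ci by (simp add: field_simps)
  qed
  finally show ?thesis .
qed

end


definition Ls :: "nat \<Rightarrow> nat \<Rightarrow> nat list set" where
  "Ls n k = {xs. set xs \<subseteq> {1..n} \<and> length xs = k}"

definition ext :: "nat list \<Rightarrow> nat \<Rightarrow> nat" where
  "ext xs = (\<lambda>m. if m < length xs then xs ! m else 0)"

lemma Ls_finite: "finite (Ls n k)"
  unfolding Ls_def by (rule finite_lists_length_eq) simp

lemma Ls_Suc: "Ls n (Suc k) = (\<lambda>(xs, j). xs @ [j]) ` (Ls n k \<times> {1..n})"
proof
  show "Ls n (Suc k) \<subseteq> (\<lambda>(xs, j). xs @ [j]) ` (Ls n k \<times> {1..n})"
  proof
    fix zs assume "zs \<in> Ls n (Suc k)"
    then have zs: "set zs \<subseteq> {1..n}" "length zs = Suc k" by (auto simp: Ls_def)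
    then obtain xs j where "zs = xs @ [j]" by (metis length_Suc_conv_rev)
    with zs show "zs \<in> (\<lambda>(xs, j). xs @ [j]) ` (Ls n k \<times> {1..n})"
      by (auto simp: Ls_def image_iff)
  qed
qed (auto simp: Ls_def)

lemma Ls_Suc_inj: "inj_on (\<lambda>(xs, j). xs @ [j]) (Ls n k \<times> {1..n})"
  by (auto simp: inj_on_def)

lemma sum_Ls_Suc:
  fixes h :: "nat list \<Rightarrow> real"
  shows "(\<Sum>zs\<in>Ls n (Suc k). h zs) = (\<Sum>xs\<in>Ls n k. \<Sum>j=1..n. h (xs @ [j]))"
proof -
  have "(\<Sum>zs\<in>Ls n (Suc k). h zs) = (\<Sum>q\<in>Ls n k \<times> {1..n}. h ((\<lambda>(xs, j). xs @ [j]) q))"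
    unfolding Ls_Suc by (rule sum.reindex[OF Ls_Suc_inj, unfolded o_def])
  also have "\<dots> = (\<Sum>(xs,j)\<in>Ls n k \<times> {1..n}. h (xs @ [j]))"
    by (rule sum.cong) auto
  also have "\<dots> = (\<Sum>xs\<in>Ls n k. \<Sum>j=1..n. h (xs @ [j]))"
    by (rule sum.cartesian_product[symmetric])
  finally show ?thesis .
qed

context saddle_setting
begin

definition U where "U x0 xs = ust p \<tau> \<sigma> g f Y A x0 (ext xs) (length xs)"

definition wl where "wl xs = prod_list (map p xs)"

lemma wl_nonneg: "set xs \<subseteq> {1..n} \<Longrightarrow> wl xs \<ge> 0"
  unfolding wl_def by (rule prod_list_nonneg) (use p_pos in \<open>force\<close>)

lemma U_snoc:
  assumes xs: "xs \<in> Ls n k" and j: "j \<in> {1..n}"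
  shows "U x0 (xs @ [j]) = Top n p \<tau> \<sigma> g f Y A j (U x0 xs)"
proof -
  have len: "length xs = k" using xs by (simp add: Ls_def)
  have dom: "\<forall>m\<le>k. ext (xs @ [j]) m \<in> {1..n}"
    using xs j unfolding Ls_def ext_def by (auto simp: nth_append less_Suc_eq_le[symmetric] dest!: nth_mem)
  have "U x0 (xs @ [j]) = ust p \<tau> \<sigma> g f Y A x0 (ext (xs @ [j])) (Suc k)" unfolding U_def using len by simp
  also have "\<dots> = Top n p \<tau> \<sigma> g f Y A (ext (xs @ [j]) k) (ust p \<tau> \<sigma> g f Y A x0 (ext (xs @ [j])) k)"
    by (rule ust_step[OF dom])
  also have "ext (xs @ [j]) k = j" using len by (simp add: ext_def nth_append)
  also have "ust p \<tau> \<sigma> g f Y A x0 (ext (xs @ [j])) k = ust p \<tau> \<sigma> g f Y A x0 (ext xs) k"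
    by (rule ust_local) (auto simp: ext_def nth_append len)
  finally show ?thesis unfolding U_def len .
qed

lemma U_dom:
  assumes xs: "xs \<in> Ls n k"
  shows "\<forall>i\<in>{1..n}. snd (U x0 xs) i \<in> Y i"
proof -
  have len: "length xs = k" using xs by (simp add: Ls_def)
  have "\<forall>m<k. ext xs m \<in> {1..n}" using xs unfolding Ls_def ext_def by (auto dest!: nth_mem)
  from spdhg_inv[OF this, of x0] show ?thesis unfolding U_def ust_def len by simp
qed

definition aseq where "aseq x0 k = (\<Sum>xs\<in>Ls n k. wl xs * V (U x0 xs))"
definition bseq where "bseq x0 k = (\<Sum>xs\<in>Ls n k. wl xs *
   (\<Sum>j=1..n. sqnorm n (wdiff (Top n p \<tau> \<sigma> g f Y A j (U x0 xs)) (U x0 xs))))"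

lemma aseq_nonneg: "aseq x0 k \<ge> 0"
  unfolding aseq_def by (intro sum_nonneg mult_nonneg_nonneg wl_nonneg V_nonneg) (auto simp: Ls_def)

lemma bseq_nonneg: "bseq x0 k \<ge> 0"
  unfolding bseq_def by (intro sum_nonneg mult_nonneg_nonneg wl_nonneg sqnorm_nonneg) (auto simp: Ls_def)

lemma ab_step: "aseq x0 (Suc k) + kap * bseq x0 k \<le> aseq x0 k"
proof -
  have "aseq x0 (Suc k) = (\<Sum>xs\<in>Ls n k. \<Sum>j=1..n. wl (xs @ [j]) * V (U x0 (xs @ [j])))"
    unfolding aseq_def by (rule sum_Ls_Suc)
  also have "\<dots> = (\<Sum>xs\<in>Ls n k. wl xs * (\<Sum>j=1..n. p j * V (Top n p \<tau> \<sigma> g f Y A j (U x0 xs))))"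
    unfolding sum_distrib_left
    by (intro sum.cong refl) (simp add: U_snoc wl_def mult_ac)
  finally have a: "aseq x0 (Suc k) = \<dots>" .
  define Aa where "Aa xs = (\<Sum>j=1..n. p j * V (Top n p \<tau> \<sigma> g f Y A j (U x0 xs)))" for xs
  define Bb where "Bb xs = (\<Sum>j=1..n. sqnorm n (wdiff (Top n p \<tau> \<sigma> g f Y A j (U x0 xs)) (U x0 xs)))" for xs
  have kb: "kap * bseq x0 k = (\<Sum>xs\<in>Ls n k. kap * (wl xs * Bb xs))"
    unfolding bseq_def Bb_def by (simp add: sum_distrib_left)
  have "aseq x0 (Suc k) + kap * bseq x0 k = (\<Sum>xs\<in>Ls n k. wl xs * Aa xs + kap * (wl xs * Bb xs))"
    unfolding a kb Aa_def sum.distrib by simp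
  also have "\<dots> = (\<Sum>xs\<in>Ls n k. wl xs * (Aa xs + kap * Bb xs))"
    by (intro sum.cong refl) (simp add: distrib_left mult.left_commute)
  finally have "aseq x0 (Suc k) + kap * bseq x0 k =
     (\<Sum>xs\<in>Ls n k. wl xs * ((\<Sum>j=1..n. p j * V (Top n p \<tau> \<sigma> g f Y A j (U x0 xs)))
        + kap * (\<Sum>j=1..n. sqnorm n (wdiff (Top n p \<tau> \<sigma> g f Y A j (U x0 xs)) (U x0 xs)))))"
    unfolding Aa_def Bb_def .
  also have "\<dots> \<le> (\<Sum>xs\<in>Ls n k. wl xs * V (U x0 xs))"
  proof (intro sum_mono mult_left_mono)
    fix xs assume xs: "xs \<in> Ls n k"
    obtain x y where u: "U x0 xs = (x, y)" by (cases "U x0 xs")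
    have yY: "\<forall>i\<in>{1..n}. y i \<in> Y i" using U_dom[OF xs, of x0] u by simp
    show "(\<Sum>j=1..n. p j * V (Top n p \<tau> \<sigma> g f Y A j (U x0 xs)))
        + kap * (\<Sum>j=1..n. sqnorm n (wdiff (Top n p \<tau> \<sigma> g f Y A j (U x0 xs)) (U x0 xs))) \<le> V (U x0 xs)"
      unfolding u by (rule lyap[OF yY])
    show "0 \<le> wl xs" using xs by (intro wl_nonneg) (simp add: Ls_def)
  qed
  finally show ?thesis unfolding aseq_def .
qed

lemma bseq_summable: "summable (bseq x0)"
proof -
  have tele: "kap * (\<Sum>k<N. bseq x0 k) + aseq x0 N \<le> aseq x0 0" for N
  proof (induction N)
    case (Suc N)
    then show ?case using ab_step[of x0 N] by (simp add: distrib_left)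
  qed simp
  have "(\<Sum>k<N. bseq x0 k) \<le> aseq x0 0 / kap" for N
    using tele[of N] aseq_nonneg[of x0 N] kap_pos by (simp add: pos_le_divide_eq mult.commute)
  then show ?thesis by (intro summableI_nonneg_bounded[where x="aseq x0 0 / kap"] bseq_nonneg)
qed

end


lemma prod_nth_list: "(\<Prod>m<length xs. p (xs ! m)) = prod_list (map p xs)"
proof (induction xs rule: rev_induct)
  case (snoc a xs)
  have "(\<Prod>m<length (xs @ [a]). p ((xs @ [a]) ! m)) = (\<Prod>m<length xs. p ((xs @ [a]) ! m)) * p a"
    by (simp add: nth_append)
  also have "(\<Prod>m<length xs. p ((xs @ [a]) ! m)) = (\<Prod>m<length xs. p (xs ! m))"
    by (rule prod.cong) (auto simp: nth_append)
  finally show ?case using snoc by simp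
qed simp

locale pJ = prob_space M for M :: "'a measure" +
  fixes J :: "nat \<Rightarrow> 'a \<Rightarrow> nat" and n :: nat and p :: "nat \<Rightarrow> real"
  assumes J_meas: "\<forall>k. J k \<in> measurable M (count_space UNIV)"
    and J_indep: "indep_vars (\<lambda>_. count_space UNIV) J UNIV"
    and J_distr: "\<forall>k. \<forall>i\<in>{1..n}. measure M {\<omega> \<in> space M. J k \<omega> = i} = p i"
    and p_sum1: "(\<Sum>i=1..n. p i) = 1"
begin

lemma Jm[measurable]: "J k \<in> measurable M (count_space UNIV)" using J_meas by auto

lemma AE_J: "AE \<omega> in M. \<forall>m. J m \<omega> \<in> {1..n}"
proof -
  have "AE \<omega> in M. J m \<omega> \<in> {1..n}" for m
  proof -
    define N where "N = distr M (count_space UNIV) (J m)"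
    interpret N: prob_space N unfolding N_def by (rule prob_space_distr) simp
    have "measure N {1..n} = (\<Sum>i\<in>{1..n}. measure N {i})"
      by (rule N.finite_measure_eq_sum_singleton) (auto simp: N_def)
    also have "\<dots> = (\<Sum>i\<in>{1..n}. p i)"
    proof (rule sum.cong)
      fix i assume i: "i \<in> {1..n}"
      have "measure N {i} = measure M (J m -` {i} \<inter> space M)" unfolding N_def by (rule measure_distr) auto
      also have "J m -` {i} \<inter> space M = {\<omega> \<in> space M. J m \<omega> = i}" by auto
      finally show "measure N {i} = p i" using J_distr i by simp
    qed simp
    finally have "measure N {1..n} = 1" using p_sum1 by simp
    moreover have "measure N {1..n} = prob {\<omega> \<in> space M. J m \<omega> \<in> {1..n}}"
    proof -
      have "measure N {1..n} = measure M (J m -` {1..n} \<inter> space M)" unfolding N_def by (rule measure_distr) auto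
      also have "J m -` {1..n} \<inter> space M = {\<omega> \<in> space M. J m \<omega> \<in> {1..n}}" by auto
      finally show ?thesis .
    qed
    ultimately have "prob {\<omega> \<in> space M. J m \<omega> \<in> {1..n}} = 1" by simp
    from AE_prob_1[OF this] show ?thesis by auto
  qed
  then show ?thesis by (simp add: AE_all_countable)
qed

lemma map_J_meas: "(\<lambda>\<omega>. map (\<lambda>m. J m \<omega>) [0..<k]) \<in> measurable M (count_space UNIV)"
proof (induction k)
  case 0 then show ?case by simp
next
  case (Suc k)
  have "(\<lambda>\<omega>. (\<lambda>a \<omega>. a @ [J k \<omega>]) (map (\<lambda>m. J m \<omega>) [0..<k]) \<omega>) \<in> measurable M (count_space UNIV)"
  proof (rule measurable_compose_countable[OF _ Suc.IH])
    fix a :: "nat list"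
    show "(\<lambda>\<omega>. a @ [J k \<omega>]) \<in> measurable M (count_space UNIV)"
      using measurable_compose_countable[where f="\<lambda>b \<omega>. a @ [b]" and g="J k" and M=M and N="count_space UNIV"]
      by simp
  qed
  then show ?case by simp
qed

lemma list_event:
  "{\<omega> \<in> space M. map (\<lambda>m. J m \<omega>) [0..<k] = xs} \<in> sets M"
proof -
  have "{\<omega> \<in> space M. map (\<lambda>m. J m \<omega>) [0..<k] = xs} = (\<lambda>\<omega>. map (\<lambda>m. J m \<omega>) [0..<k]) -` {xs} \<inter> space M" by auto
  also have "\<dots> \<in> sets M" using map_J_meas by (rule measurable_sets) simp
  finally show ?thesis .
qed

lemma list_prob:
  assumes xs: "xs \<in> Ls n k"
  shows "prob {\<omega> \<in> space M. map (\<lambda>m. J m \<omega>) [0..<k] = xs} = prod_list (map p xs)"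
proof (cases "k = 0")
  case True
  then have "xs = []" using xs by (simp add: Ls_def)
  then show ?thesis using True by (simp add: prob_space)
next
  case False
  have len: "length xs = k" using xs by (simp add: Ls_def)
  have ev: "{\<omega> \<in> space M. map (\<lambda>m. J m \<omega>) [0..<k] = xs} = (\<Inter>m\<in>{..<k}. J m -` {xs ! m} \<inter> space M)"
    using False len by (auto simp: list_eq_iff_nth_eq)
  have ind: "indep_vars (\<lambda>_. count_space UNIV) J {..<k}" using J_indep by (rule indep_vars_subset) simp
  have "prob (\<Inter>m\<in>{..<k}. J m -` {xs ! m} \<inter> space M) = (\<Prod>m\<in>{..<k}. prob (J m -` {xs ! m} \<inter> space M))"
    using False by (intro indep_varsD_finite[OF ind]) auto
  also have "\<dots> = (\<Prod>m<k. p (xs ! m))"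
  proof (rule prod.cong)
    fix m assume "m \<in> {..<k}"
    then have "xs ! m \<in> {1..n}" using xs len by (auto simp: Ls_def dest!: nth_mem)
    moreover have "J m -` {xs ! m} \<inter> space M = {\<omega> \<in> space M. J m \<omega> = xs ! m}" by auto
    ultimately show "prob (J m -` {xs ! m} \<inter> space M) = p (xs ! m)" using J_distr by simp
  qed simp
  finally show ?thesis unfolding ev using prod_nth_list[of p xs] len by simp
qed

lemma expect_list:
  fixes F :: "nat list \<Rightarrow> real"
  shows "integrable M (\<lambda>\<omega>. F (map (\<lambda>m. J m \<omega>) [0..<k]))
    \<and> (\<integral>\<omega>. F (map (\<lambda>m. J m \<omega>) [0..<k]) \<partial>M) = (\<Sum>xs\<in>Ls n k. F xs * prod_list (map p xs))"
proof -
  define E where "E xs = {\<omega> \<in> space M. map (\<lambda>m. J m \<omega>) [0..<k] = xs}" for xs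
  define G where "G \<omega> = (\<Sum>xs\<in>Ls n k. F xs * indicator (E xs) \<omega>)" for \<omega>
  have Es: "E xs \<in> sets M" for xs unfolding E_def by (rule list_event)
  have mF: "(\<lambda>\<omega>. F (map (\<lambda>m. J m \<omega>) [0..<k])) \<in> borel_measurable M"
    using measurable_compose_countable[where f="\<lambda>a \<omega>. F a" and g="\<lambda>\<omega>. map (\<lambda>m. J m \<omega>) [0..<k]"
        and M=M and N=borel] map_J_meas by simp
  have iE: "integrable M (\<lambda>\<omega>. F xs * indicator (E xs) \<omega>)" for xs
  proof -
    have "integrable M (indicator (E xs) :: 'a \<Rightarrow> real)"
      using Es[of xs] by (intro integrable_real_indicator) (auto simp: emeasure_eq_measure)
    then show ?thesis by (rule integrable_mult_right[of "F xs"])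
  qed
  have iG: "integrable M G" unfolding G_def
    by (rule Bochner_Integration.integrable_sum) (rule iE)
  have mG: "G \<in> borel_measurable M" using iG by (rule borel_measurable_integrable)
  have ae: "AE \<omega> in M. F (map (\<lambda>m. J m \<omega>) [0..<k]) = G \<omega>"
    using AE_J AE_space
  proof (eventually_elim)
    case (elim \<omega>)
    have inL: "map (\<lambda>m. J m \<omega>) [0..<k] \<in> Ls n k" using elim(1) by (auto simp: Ls_def)
    have "G \<omega> = (\<Sum>xs\<in>Ls n k. if xs = map (\<lambda>m. J m \<omega>) [0..<k] then F xs else 0)"
      unfolding G_def by (intro sum.cong refl) (auto simp: E_def indicator_def elim)
    also have "\<dots> = F (map (\<lambda>m. J m \<omega>) [0..<k])" using inL Ls_finite by (simp add: sum.delta')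
    finally show ?case by simp
  qed
  have "integrable M (\<lambda>\<omega>. F (map (\<lambda>m. J m \<omega>) [0..<k]))"
    using integrable_cong_AE[OF mF mG ae] iG by simp
  moreover have "(\<integral>\<omega>. F (map (\<lambda>m. J m \<omega>) [0..<k]) \<partial>M) = integral\<^sup>L M G"
    by (rule integral_cong_AE[OF mF mG ae])
  moreover have "integral\<^sup>L M G = (\<Sum>xs\<in>Ls n k. F xs * prod_list (map p xs))"
  proof -
    have "integral\<^sup>L M G = (\<Sum>xs\<in>Ls n k. integral\<^sup>L M (\<lambda>\<omega>. F xs * indicator (E xs) \<omega>))"
      unfolding G_def by (rule Bochner_Integration.integral_sum) (rule iE)
    also have "\<dots> = (\<Sum>xs\<in>Ls n k. F xs * prod_list (map p xs))"
    proof (rule sum.cong)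
      fix xs assume xs: "xs \<in> Ls n k"
      have "integral\<^sup>L M (\<lambda>\<omega>. F xs * indicator (E xs) \<omega>) = F xs * prob (E xs)"
        using Es by simp
      then show "integral\<^sup>L M (\<lambda>\<omega>. F xs * indicator (E xs) \<omega>) = F xs * prod_list (map p xs)"
        using list_prob[OF xs] unfolding E_def by simp
    qed simp
    finally show ?thesis .
  qed
  ultimately show ?thesis by simp
qed

end


lemma (in saddle_setting) ust_U:
  "ust p \<tau> \<sigma> g f Y A x0 (\<lambda>m. J m \<omega>) k = U x0 (map (\<lambda>m. J m \<omega>) [0..<k])"
proof -
  have l: "length (map (\<lambda>m. J m \<omega>) [0..<k]) = k" by simp
  show ?thesis unfolding U_def l by (rule ust_local) (auto simp: ext_def)
qed

theorem mainTheorem6: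
  fixes M :: "'a measure" and J :: "nat \<Rightarrow> 'a \<Rightarrow> nat"
    and n :: nat and p \<sigma> :: "nat \<Rightarrow> real" and \<tau> :: real
    and g :: "'x::euclidean_space \<Rightarrow> ereal" and f :: "nat \<Rightarrow> 'y::euclidean_space \<Rightarrow> ereal"
    and Y :: "nat \<Rightarrow> 'y set" and A :: "nat \<Rightarrow> 'x \<Rightarrow> 'y" and x0 :: 'x
  assumes Y_sub: "\<forall>i\<in>{1..n}. subspace (Y i)"
    and A_lin: "\<forall>i\<in>{1..n}. linear (A i) \<and> (\<forall>x. A i x \<in> Y i)"
    and g_pcl: "econvex_on UNIV g \<and> eproper_on UNIV g \<and> elsc_on UNIV g"
    and f_pcl: "\<forall>i\<in>{1..n}. econvex_on (Y i) (f i) \<and> eproper_on (Y i) (f i) \<and> elsc_on (Y i) (f i)"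
    and p_pos: "\<forall>i\<in>{1..n}. p i > 0" and p_sum: "(\<Sum>i=1..n. p i) = 1"
    and tau_pos: "\<tau> > 0" and sigma_pos: "\<forall>i\<in>{1..n}. \<sigma> i > 0"
    and saddle: "\<exists>xh yh. saddle_point n Y A f g xh yh"
    and steps: "\<forall>i\<in>{1..n}. \<tau> * \<sigma> i * (onorm (A i))\<^sup>2 < p i"
    and M_prob: "prob_space M"
    and J_meas: "\<forall>k. J k \<in> measurable M (count_space UNIV)"
    and J_indep: "prob_space.indep_vars M (\<lambda>_. count_space UNIV) J UNIV"
    and J_distr: "\<forall>k. \<forall>i\<in>{1..n}. measure M {\<omega> \<in> space M. J k \<omega> = i} = p i"
  shows "\<forall>j\<in>{1..n}.
     (let u = (\<lambda>k \<omega>. (fst (spdhg p \<tau> \<sigma> g f Y A x0 (\<lambda>m. J m \<omega>) (Suc k)),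
                        fst (snd (spdhg p \<tau> \<sigma> g f Y A x0 (\<lambda>m. J m \<omega>) k))))
      in (\<lambda>k. \<integral>\<omega>. sqnorm n (wdiff (Top n p \<tau> \<sigma> g f Y A j (u k \<omega>)) (u k \<omega>)) \<partial>M) \<longlonglongrightarrow> 0
       \<and> (AE \<omega> in M. (\<lambda>k. fst (wdiff (Top n p \<tau> \<sigma> g f Y A j (u k \<omega>)) (u k \<omega>))) \<longlonglongrightarrow> 0
                     \<and> (\<forall>i\<in>{1..n}. (\<lambda>k. snd (wdiff (Top n p \<tau> \<sigma> g f Y A j (u k \<omega>)) (u k \<omega>)) i) \<longlonglongrightarrow> 0)))"
proof -
  interpret S: setting n p \<sigma> \<tau> g f Y A
    by (intro setting.intro; fact Y_sub A_lin g_pcl f_pcl p_pos p_sum tau_pos sigma_pos saddle steps)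
  obtain xh yh gx c where sf: "\<forall>i\<in>{1..n}. yh i \<in> Y i" "g xh = ereal gx"
    "\<forall>x. ereal (gx + inner (- (\<Sum>i=1..n. adjoint (A i) (yh i))) (x - xh)) \<le> g x"
    "\<forall>i\<in>{1..n}. S.F i (yh i) = ereal (c i)"
    "\<forall>i\<in>{1..n}. \<forall>y\<in>Y i. ereal (c i + inner (A i xh) (y - yh i)) \<le> S.F i y"
    by (rule S.saddle_facts)
  interpret SS: saddle_setting n p \<sigma> \<tau> g f Y A xh yh gx c
    using sf by (intro saddle_setting.intro[OF S.setting_axioms] saddle_setting_axioms.intro) auto
  interpret P: pJ M J n p
    using J_meas J_indep J_distr p_sum by (intro pJ.intro[OF M_prob] pJ_axioms.intro) auto
  show ?thesis
  proof (intro ballI, unfold Let_def)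
    fix j assume j: "j \<in> {1..n}"
    define Fk where "Fk k xs = sqnorm n (wdiff (Top n p \<tau> \<sigma> g f Y A j (SS.U x0 xs)) (SS.U x0 xs))" for k :: nat and xs
    define I where "I k \<omega> = sqnorm n (wdiff (Top n p \<tau> \<sigma> g f Y A j
        (fst (spdhg p \<tau> \<sigma> g f Y A x0 (\<lambda>m. J m \<omega>) (Suc k)), fst (snd (spdhg p \<tau> \<sigma> g f Y A x0 (\<lambda>m. J m \<omega>) k))))
        (fst (spdhg p \<tau> \<sigma> g f Y A x0 (\<lambda>m. J m \<omega>) (Suc k)), fst (snd (spdhg p \<tau> \<sigma> g f Y A x0 (\<lambda>m. J m \<omega>) k))))" for k \<omega>
    have IF: "I k \<omega> = Fk k (map (\<lambda>m. J m \<omega>) [0..<k])" for k \<omega>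
      unfolding I_def Fk_def SS.ust_U[symmetric] ust_def by simp
    have EI: "integrable M (I k) \<and> (\<integral>\<omega>. I k \<omega> \<partial>M) = (\<Sum>xs\<in>Ls n k. Fk k xs * prod_list (map p xs))" for k
      unfolding IF using P.expect_list[of "Fk k" k] by simp
    have I0: "I k \<omega> \<ge> 0" for k \<omega> unfolding I_def by (rule sqnorm_nonneg)
    have Eb: "(\<integral>\<omega>. I k \<omega> \<partial>M) \<le> SS.bseq x0 k" for k
    proof -
      have "(\<integral>\<omega>. I k \<omega> \<partial>M) = (\<Sum>xs\<in>Ls n k. SS.wl xs * Fk k xs)"
        using EI by (simp add: SS.wl_def mult.commute)
      also have "\<dots> \<le> SS.bseq x0 k" unfolding SS.bseq_def
      proof (intro sum_mono mult_left_mono)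
        fix xs assume xs: "xs \<in> Ls n k"
        show "0 \<le> SS.wl xs" using xs by (intro SS.wl_nonneg) (simp add: Ls_def)
        show "Fk k xs \<le> (\<Sum>j=1..n. sqnorm n (wdiff (Top n p \<tau> \<sigma> g f Y A j (SS.U x0 xs)) (SS.U x0 xs)))"
          unfolding Fk_def using j by (intro member_le_sum sqnorm_nonneg) auto
      qed
      finally show ?thesis .
    qed
    have E0: "(\<integral>\<omega>. I k \<omega> \<partial>M) \<ge> 0" for k using I0 by (simp add: integral_nonneg)
    have bsum: "summable (SS.bseq x0)" by (rule SS.bseq_summable)
    have b0: "SS.bseq x0 \<longlonglongrightarrow> 0" using bsum by (rule summable_LIMSEQ_zero)
    have conv1: "(\<lambda>k. \<integral>\<omega>. I k \<omega> \<partial>M) \<longlonglongrightarrow> 0"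
      by (rule tendsto_sandwich[OF _ _ tendsto_const b0]) (auto intro: E0 Eb always_eventually)
    have mI: "I k \<in> borel_measurable M" for k using EI by (auto intro: borel_measurable_integrable)
    have nnI: "(\<integral>\<^sup>+\<omega>. ennreal (I k \<omega>) \<partial>M) = ennreal (\<integral>\<omega>. I k \<omega> \<partial>M)" for k
      using EI I0 by (intro nn_integral_eq_integral) auto
    have "(\<integral>\<^sup>+\<omega>. (\<Sum>k. ennreal (I k \<omega>)) \<partial>M) = (\<Sum>k. \<integral>\<^sup>+\<omega>. ennreal (I k \<omega>) \<partial>M)"
      using mI by (intro nn_integral_suminf) auto
    also have "\<dots> = (\<Sum>k. ennreal (\<integral>\<omega>. I k \<omega> \<partial>M))" using nnI by simp
    also have "\<dots> \<le> (\<Sum>k. ennreal (SS.bseq x0 k))"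
      using Eb by (intro suminf_le summableI) (auto intro: ennreal_leI)
    also have "\<dots> = ennreal (\<Sum>k. SS.bseq x0 k)"
      using bsum SS.bseq_nonneg by (intro suminf_ennreal2) auto
    finally have fin: "(\<integral>\<^sup>+\<omega>. (\<Sum>k. ennreal (I k \<omega>)) \<partial>M) \<noteq> \<infinity>"
      by (metis ennreal_neq_top infinity_ennreal_def neq_top_trans)
    have "AE \<omega> in M. (\<Sum>k. ennreal (I k \<omega>)) \<noteq> \<infinity>"
      using mI by (intro nn_integral_PInf_AE fin) measurable
    then have aeI: "AE \<omega> in M. (\<lambda>k. I k \<omega>) \<longlonglongrightarrow> 0"
    proof (eventually_elim)
      case (elim \<omega>)
      have "summable (\<lambda>k. I k \<omega>)" using elim I0 by (intro summable_suminf_not_top) auto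
      then show ?case by (rule summable_LIMSEQ_zero)
    qed
    show "(\<lambda>k. \<integral>\<omega>. sqnorm n (wdiff (Top n p \<tau> \<sigma> g f Y A j
        (fst (spdhg p \<tau> \<sigma> g f Y A x0 (\<lambda>m. J m \<omega>) (Suc k)), fst (snd (spdhg p \<tau> \<sigma> g f Y A x0 (\<lambda>m. J m \<omega>) k))))
        (fst (spdhg p \<tau> \<sigma> g f Y A x0 (\<lambda>m. J m \<omega>) (Suc k)), fst (snd (spdhg p \<tau> \<sigma> g f Y A x0 (\<lambda>m. J m \<omega>) k)))) \<partial>M) \<longlonglongrightarrow> 0 \<and>
      (AE \<omega> in M. (\<lambda>k. fst (wdiff (Top n p \<tau> \<sigma> g f Y A j
        (fst (spdhg p \<tau> \<sigma> g f Y A x0 (\<lambda>m. J m \<omega>) (Suc k)), fst (snd (spdhg p \<tau> \<sigma> g f Y A x0 (\<lambda>m. J m \<omega>) k))))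
        (fst (spdhg p \<tau> \<sigma> g f Y A x0 (\<lambda>m. J m \<omega>) (Suc k)), fst (snd (spdhg p \<tau> \<sigma> g f Y A x0 (\<lambda>m. J m \<omega>) k))))) \<longlonglongrightarrow> 0 \<and>
        (\<forall>i\<in>{1..n}. (\<lambda>k. snd (wdiff (Top n p \<tau> \<sigma> g f Y A j
        (fst (spdhg p \<tau> \<sigma> g f Y A x0 (\<lambda>m. J m \<omega>) (Suc k)), fst (snd (spdhg p \<tau> \<sigma> g f Y A x0 (\<lambda>m. J m \<omega>) k))))
        (fst (spdhg p \<tau> \<sigma> g f Y A x0 (\<lambda>m. J m \<omega>) (Suc k)), fst (snd (spdhg p \<tau> \<sigma> g f Y A x0 (\<lambda>m. J m \<omega>) k)))) i) \<longlonglongrightarrow> 0))"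
      (is "?A \<and> (AE \<omega> in M. ?B \<omega> \<and> ?C \<omega>)")
    proof
      show ?A using conv1 unfolding I_def .
      show "AE \<omega> in M. ?B \<omega> \<and> ?C \<omega>"
        using aeI
      proof (eventually_elim)
        case (elim \<omega>)
        define W where "W k = wdiff (Top n p \<tau> \<sigma> g f Y A j
          (fst (spdhg p \<tau> \<sigma> g f Y A x0 (\<lambda>m. J m \<omega>) (Suc k)), fst (snd (spdhg p \<tau> \<sigma> g f Y A x0 (\<lambda>m. J m \<omega>) k))))
          (fst (spdhg p \<tau> \<sigma> g f Y A x0 (\<lambda>m. J m \<omega>) (Suc k)), fst (snd (spdhg p \<tau> \<sigma> g f Y A x0 (\<lambda>m. J m \<omega>) k)))" for k
        have IW: "I k \<omega> = sqnorm n (W k)" for k unfolding I_def W_def ..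
        have sq: "(\<lambda>k. sqrt (I k \<omega>)) \<longlonglongrightarrow> 0" using tendsto_real_sqrt[OF elim] by simp
        have c1: "norm (fst (W k)) \<le> sqrt (I k \<omega>)" for k
        proof -
          have "(norm (fst (W k)))\<^sup>2 \<le> sqnorm n (W k)"
            unfolding sqnorm_def by (simp add: sum_nonneg)
          then show ?thesis unfolding IW by (simp add: real_le_rsqrt)
        qed
        have c2: "norm (snd (W k) i) \<le> sqrt (I k \<omega>)" if i: "i \<in> {1..n}" for k i
        proof -
          have "(norm (snd (W k) i))\<^sup>2 \<le> (\<Sum>i=1..n. (norm (snd (W k) i))\<^sup>2)"
            using i by (intro member_le_sum) auto
          also have "\<dots> \<le> sqnorm n (W k)" unfolding sqnorm_def by simp
          finally show ?thesis unfolding IW by (simp add: real_le_rsqrt)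
        qed
        have B: "(\<lambda>k. fst (W k)) \<longlonglongrightarrow> 0"
          by (rule tendsto_norm_zero_cancel, rule tendsto_sandwich[OF _ _ tendsto_const sq])
             (auto intro: c1 always_eventually)
        have C: "\<forall>i\<in>{1..n}. (\<lambda>k. snd (W k) i) \<longlonglongrightarrow> 0"
        proof
          fix i assume i: "i \<in> {1..n}"
          show "(\<lambda>k. snd (W k) i) \<longlonglongrightarrow> 0"
            by (rule tendsto_norm_zero_cancel, rule tendsto_sandwich[OF _ _ tendsto_const sq])
               (auto intro: c2[OF i] always_eventually)
        qed
        show ?case using B C unfolding W_def by simp
      qed
    qed
  qed
qed



end
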